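(* Let $\mathcal{T}$ be a planar triangulation, $m\in\mathbb{Z}_{\ge0}$, $r\in\mathbb{Z}_{\ge-1}$, and $\mathbf{r}$ a smoothness distribution with $\mathbf r(\tau)\in\{r,-1\}$ for all interior edges, such that $\mathcal{Q}^{\mathbf r}$ is lower-acyclic. Let $\sigma$ be a face bounded by edges $\tau_1,\tau_2,\tau_3$, and let $\gamma_i=\tau_i\cap\tau_{i+1}$ (indices cyclic in $1,2,3$) be interior vertices of $\mathcal{T}$. Assume that for all $i\in\{1,2,3\}$: $\mathbf{r}(\tau_i)=r$, and $\mathbf{r}(\tau)\neq-1$ for every edge $\tau$ incident on $\gamma_i$. Suppose $\gamma_i$ has $n_i$ distinct slopes, and put $t_i=\min\{r+2,n_i\}$ and $\Omega_i=r+\left\lceil\frac{r+1}{t_i-1}\right\rceil$ for $i=1,2,3$. If $$m>\frac{\Omega_1+\Omega_2+\Omega_3-3}{2},$$ then $\mathcal{Q}^{\mathbf s}$ is lower-acyclic, where $\mathbf s(\tau)=\mathbf r(\tau)$ for interior edges $\tau\notin\{\tau_1,\tau_2,\tau_3\}$ and $\mathbf s(\tau_i)=-1$ for $i=1,2,3$.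
   Context: $\mathcal{T}$ is a finite planar triangulation of a closed polygonal region $\Omega\subset\mathbb{R}^2$ (possibly not simply connected). An edge or vertex is interior if not contained in $\partial\Omega$; $\mathcal{T}^\circ_1,\mathcal{T}^\circ_0$ denote interior edges and vertices, $\mathcal{T}_2$ the faces. The number of distinct slopes at a vertex $\gamma$ is the number of distinct directions (lines through $\gamma$) among the edges containing $\gamma$. ${\mathcal{P}}_m$ is the space of real bivariate polynomials of total degree at most $m$; $\langle f_1,\dots,f_k\rangle$ denotes the subspace of ${\mathcal{P}}_m$ of polynomial combinations $\sum g_if_i$ lying in ${\mathcal{P}}_m$. A smoothness distribution is a map $\mathbf{r}:\mathcal{T}^\circ_1\to\mathbb{Z}_{\ge -1}$. For $\tau\in\mathcal{T}^\circ_1$ with vanishing affine-linear form $\ell_\tau$, $\mathfrak{J}^{\mathbf r}_\tau=\langle \ell_\tau^{\mathbf r(\tau)+1}\rangle$ (equal to ${\mathcal{P}}_m$ if $\mathbf r(\tau)=-1$); for $\gamma\in\mathcal{T}^\circ_0$, $\mathfrak{J}^{\mathbf r}_\gamma=\sum_{\tau\ni\gamma}\mathfrak{J}^{\mathbf r}_\tau$. $\mathcal{C}$ is the chain complex $\bigoplus_{\sigma\in\mathcal{T}_2}{\mathcal{P}}_m\to\bigoplus_{\tau\in\mathcal{T}^\circ_1}{\mathcal{P}}_m\to\bigoplus_{\gamma\in\mathcal{T}^\circ_0}{\mathcal{P}}_m$ (degrees $2,1,0$) with the cellular boundary maps of $\mathcal{T}$ relative to $\partial\Omega$ (signs $\pm1$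 from fixed orientations); $\mathcal{I}^{\mathbf r}$ is the subcomplex $0\to\bigoplus_\tau\mathfrak{J}^{\mathbf r}_\tau\to\bigoplus_\gamma\mathfrak{J}^{\mathbf r}_\gamma$; $\mathcal{Q}^{\mathbf r}=\mathcal{C}/\mathcal{I}^{\mathbf r}$, whose $H_2$ is the space of piecewise polynomials in ${\mathcal{P}}_m$ that are $C^{\mathbf r(\tau)}$ across each interior edge $\tau$. $\mathcal{Q}^{\mathbf r}$ is lower-acyclic if $H_1(\mathcal{Q}^{\mathbf r})=H_0(\mathcal{Q}^{\mathbf r})=0$. *)

theory Defs
  imports "HOL-Analysis.Analysis"
begin

type_synonym pt = "real \<times> real"

definition triangulation :: "pt set set \<Rightarrow> bool" where
  "triangulation T \<longleftrightarrow> finite T \<and>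
     (\<forall>\<sigma>\<in>T. card \<sigma> = 3 \<and> \<not> affine_dependent \<sigma>) \<and>
     (\<forall>\<sigma>\<in>T. \<forall>\<sigma>'\<in>T. convex hull \<sigma> \<inter> convex hull \<sigma>' = convex hull (\<sigma> \<inter> \<sigma>'))"

definition region :: "pt set set \<Rightarrow> pt set" where
  "region T = (\<Union>\<sigma>\<in>T. convex hull \<sigma>)"

definition edges :: "pt set set \<Rightarrow> pt set set" where
  "edges T = {\<tau>. card \<tau> = 2 \<and> (\<exists>\<sigma>\<in>T. \<tau> \<subseteq> \<sigma>)}"

definition int_edges :: "pt set set \<Rightarrow> pt set set" where
  "int_edges T = {\<tau> \<in> edges T. \<not> (convex hull \<tau> \<subseteq> frontier (region T))}"

definition int_verts :: "pt set set \<Rightarrow> pt set" where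
  "int_verts T = {v \<in> \<Union>T. v \<notin> frontier (region T)}"

definition nslopes :: "pt set set \<Rightarrow> pt \<Rightarrow> nat" where
  "nslopes T v = card ((\<lambda>\<tau>. affine hull \<tau>) ` {\<tau> \<in> edges T. v \<in> \<tau>})"

text \<open>Fixed orientations: edges oriented from lexicographically smaller to larger
endpoint; faces oriented counterclockwise.\<close>
definition lexless :: "pt \<Rightarrow> pt \<Rightarrow> bool" where
  "lexless a b \<longleftrightarrow> fst a < fst b \<or> (fst a = fst b \<and> snd a < snd b)"

definition lmin :: "pt set \<Rightarrow> pt" where
  "lmin \<tau> = (THE a. a \<in> \<tau> \<and> (\<forall>x\<in>\<tau>. x \<noteq> a \<longrightarrow> lexless a x))"

definition lmax :: "pt set \<Rightarrow> pt" where
  "lmax \<tau> = (THE b. b \<in> \<tau> \<and> (\<forall>x\<in>\<tau>. x \<noteq> b \<longrightarrow> lexless x b))"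

definition det2 :: "pt \<Rightarrow> pt \<Rightarrow> real" where
  "det2 u v = fst u * snd v - snd u * fst v"

text \<open>Coefficient of the vertex \<gamma> in the boundary of the oriented edge \<tau>.\<close>
definition edge_vsign :: "pt set \<Rightarrow> pt \<Rightarrow> real" where
  "edge_vsign \<tau> \<gamma> = (if \<gamma> = lmax \<tau> then 1 else if \<gamma> = lmin \<tau> then -1 else 0)"

text \<open>Coefficient of the oriented edge \<tau> in the boundary of the (ccw) face \<sigma>.\<close>
definition face_esign :: "pt set \<Rightarrow> pt set \<Rightarrow> real" where
  "face_esign \<sigma> \<tau> = (if \<tau> \<subseteq> \<sigma> \<and> card \<tau> = 2 \<and> card \<sigma> = 3
      then sgn (det2 (lmax \<tau> - lmin \<tau>) ((THE c. c \<in> \<sigma> - \<tau>) - lmin \<tau>)) else 0)"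

text \<open>Bivariate real polynomials, represented as polynomial functions on the plane.\<close>
definition poly_fun :: "(pt \<Rightarrow> real) \<Rightarrow> bool" where
  "poly_fun p \<longleftrightarrow> (\<exists>c :: nat \<Rightarrow> nat \<Rightarrow> real. \<exists>N.
      \<forall>x y. p (x, y) = (\<Sum>i\<le>N. \<Sum>j\<le>N. c i j * x ^ i * y ^ j))"

definition Pm :: "nat \<Rightarrow> (pt \<Rightarrow> real) set" where
  "Pm m = {p. \<exists>c :: nat \<Rightarrow> nat \<Rightarrow> real.
      \<forall>x y. p (x, y) = (\<Sum>i\<le>m. \<Sum>j\<le>m - i. c i j * x ^ i * y ^ j)}"

definition lform :: "pt set \<Rightarrow> pt \<Rightarrow> real" where
  "lform \<tau> z = det2 (lmax \<tau> - lmin \<tau>) (z - lmin \<tau>)"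

definition J_edge :: "nat \<Rightarrow> (pt set \<Rightarrow> int) \<Rightarrow> pt set \<Rightarrow> (pt \<Rightarrow> real) set" where
  "J_edge m rr \<tau> = {q \<in> Pm m. \<exists>g. poly_fun g \<and>
      q = (\<lambda>z. g z * lform \<tau> z ^ nat (rr \<tau> + 1))}"

definition J_vert :: "pt set set \<Rightarrow> nat \<Rightarrow> (pt set \<Rightarrow> int) \<Rightarrow> pt \<Rightarrow> (pt \<Rightarrow> real) set" where
  "J_vert T m rr \<gamma> = {q. \<exists>f. (\<forall>\<tau>\<in>int_edges T. \<gamma> \<in> \<tau> \<longrightarrow> f \<tau> \<in> J_edge m rr \<tau>) \<and>
      q = (\<lambda>z. \<Sum>\<tau>\<in>{\<tau> \<in> int_edges T. \<gamma> \<in> \<tau>}. f \<tau> z)}"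

text \<open>Boundary maps of the chain complex C (relative to the boundary of the region).\<close>
definition bd1 :: "pt set set \<Rightarrow> (pt set \<Rightarrow> pt \<Rightarrow> real) \<Rightarrow> pt \<Rightarrow> pt \<Rightarrow> real" where
  "bd1 T f \<gamma> = (\<lambda>z. \<Sum>\<tau>\<in>int_edges T. edge_vsign \<tau> \<gamma> * f \<tau> z)"

definition bd2 :: "pt set set \<Rightarrow> (pt set \<Rightarrow> pt \<Rightarrow> real) \<Rightarrow> pt set \<Rightarrow> pt \<Rightarrow> real" where
  "bd2 T h \<tau> = (\<lambda>z. \<Sum>\<sigma>\<in>T. face_esign \<sigma> \<tau> * h \<sigma> z)"

text \<open>H_0(Q^r) = 0: the induced map Q_1 \<rightarrow> Q_0 is surjective.\<close>
definition H0_vanishes :: "pt set set \<Rightarrow> nat \<Rightarrow> (pt set \<Rightarrow> int) \<Rightarrow> bool" where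
  "H0_vanishes T m rr \<longleftrightarrow> (\<forall>g. (\<forall>\<gamma>\<in>int_verts T. g \<gamma> \<in> Pm m) \<longrightarrow>
     (\<exists>f. (\<forall>\<tau>\<in>int_edges T. f \<tau> \<in> Pm m) \<and>
          (\<forall>\<gamma>\<in>int_verts T. (\<lambda>z. bd1 T f \<gamma> z - g \<gamma> z) \<in> J_vert T m rr \<gamma>)))"

text \<open>H_1(Q^r) = 0: every cycle of Q_1 is a boundary of Q_2.\<close>
definition H1_vanishes :: "pt set set \<Rightarrow> nat \<Rightarrow> (pt set \<Rightarrow> int) \<Rightarrow> bool" where
  "H1_vanishes T m rr \<longleftrightarrow> (\<forall>f. (\<forall>\<tau>\<in>int_edges T. f \<tau> \<in> Pm m) \<and>
       (\<forall>\<gamma>\<in>int_verts T. bd1 T f \<gamma> \<in> J_vert T m rr \<gamma>) \<longrightarrow>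
     (\<exists>h. (\<forall>\<sigma>\<in>T. h \<sigma> \<in> Pm m) \<and>
          (\<forall>\<tau>\<in>int_edges T. (\<lambda>z. f \<tau> z - bd2 T h \<tau> z) \<in> J_edge m rr \<tau>)))"

definition lower_acyclic :: "pt set set \<Rightarrow> nat \<Rightarrow> (pt set \<Rightarrow> int) \<Rightarrow> bool" where
  "lower_acyclic T m rr \<longleftrightarrow> H1_vanishes T m rr \<and> H0_vanishes T m rr"

end

theory Submission
  imports Defs "Jordan_Normal_Form.Determinant" "HOL-Computational_Algebra.Polynomial" "HOL-Computational_Algebra.Polynomial_Factorial" "HOL-Computational_Algebra.Field_as_Ring"
begin

lemma dual_span:
  fixes gs :: "real poly list" and d :: nat and p :: "real poly"
  assumes deg: "\<forall>g\<in>set gs. degree g \<le> d"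
    and nondeg: "\<And>y. (\<forall>g\<in>set gs. (\<Sum>n\<le>d. y n * coeff g n) = 0) \<Longrightarrow> \<forall>n\<le>d. y n = 0"
    and dp: "degree p \<le> d"
  shows "\<exists>c. p = (\<Sum>i<length gs. Polynomial.smult (c i) (gs!i))"
proof -
  define D where "D = Suc d"
  define N where "N = length gs"
  define A :: "real mat" where "A = mat D N (\<lambda>(n,i). coeff (gs!i) n)"
  have A: "A \<in> carrier_mat D N" unfolding A_def by simp
  define B where "B = A * transpose_mat A"
  have B: "B \<in> carrier_mat D D" unfolding B_def using A by simp
  have detB: "det B \<noteq> 0"
  proof
    assume "det B = 0"
    then obtain v where v: "v \<in> carrier_vec D" "v \<noteq> 0\<^sub>v D" "B *\<^sub>v v = 0\<^sub>v D"
      using det_0_iff_vec_prod_zero_field[OF B] by auto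
    define w where "w = transpose_mat A *\<^sub>v v"
    have w: "w \<in> carrier_vec N" unfolding w_def using A v by simp
    have "A *\<^sub>v w = 0\<^sub>v D" unfolding w_def B_def using v A
      by (metis B_def assoc_mult_mat_vec transpose_carrier_mat)
    hence "scalar_prod v (A *\<^sub>v w) = 0" using v by simp
    hence ww: "scalar_prod w w = 0" using transpose_vec_mult_scalar[OF A w v(1)] unfolding w_def by simp
    have wi: "\<forall>i<N. w $ i = 0"
    proof -
      have "(\<Sum>i\<in>{0..<N}. w $ i * w $ i) = 0" using ww w unfolding scalar_prod_def by simp
      hence "\<forall>i\<in>{0..<N}. w $ i * w $ i = 0"
        by (subst sum_nonneg_eq_0_iff[symmetric]) auto
      thus ?thesis by simp
    qed
    have wexp: "\<And>i. i < N \<Longrightarrow> w $ i = (\<Sum>n\<in>{0..<D}. coeff (gs!i) n * v $ n)"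
      unfolding w_def using A v
      by (simp add: scalar_prod_def A_def row_def col_def D_def)
    define y where "y = (\<lambda>n. v $ n)"
    have "\<forall>g\<in>set gs. (\<Sum>n\<le>d. y n * coeff g n) = 0"
    proof
      fix g assume "g \<in> set gs"
      then obtain i where i: "i < N" "g = gs!i" unfolding N_def by (auto simp: in_set_conv_nth)
      have "{0..<D} = {..d}" unfolding D_def by auto
      thus "(\<Sum>n\<le>d. y n * coeff g n) = 0" using wexp[OF i(1)] wi i unfolding y_def
        by (simp add: mult.commute)
    qed
    from nondeg[OF this] have "\<forall>n<D. v $ n = 0" unfolding y_def D_def by auto
    hence "v = 0\<^sub>v D" using v(1) by (intro eq_vecI) auto
    with v(2) show False by simp
  qed
  from det_non_zero_imp_unit[OF B detB, of "()"]
  obtain B' where B': "B' \<in> carrier_mat D D" "B * B' = 1\<^sub>m D"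
    unfolding Units_def ring_mat_def by auto
  define bv where "bv = Matrix.vec D (\<lambda>n. coeff p n)"
  have bv: "bv \<in> carrier_vec D" unfolding bv_def by simp
  define x where "x = transpose_mat A *\<^sub>v (B' *\<^sub>v bv)"
  have "A *\<^sub>v x = B *\<^sub>v (B' *\<^sub>v bv)" unfolding x_def B_def using A B' bv
    by (metis assoc_mult_mat_vec mult_mat_vec_carrier transpose_carrier_mat)
  also have "\<dots> = bv" using B B' bv
    by (metis assoc_mult_mat_vec one_mult_mat_vec)
  finally have Ax: "A *\<^sub>v x = bv" .
  have xc: "x \<in> carrier_vec N" unfolding x_def using A B' bv by simp
  have coeq: "\<And>n. n < D \<Longrightarrow> (\<Sum>i<N. x $ i * coeff (gs!i) n) = coeff p n"
  proof -
    fix n assume n: "n < D"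
    have "(A *\<^sub>v x) $ n = coeff p n" using Ax n unfolding bv_def by simp
    moreover have "(A *\<^sub>v x) $ n = (\<Sum>i\<in>{0..<N}. coeff (gs!i) n * x $ i)"
      using n A xc by (simp add: scalar_prod_def A_def row_def)
    ultimately show "(\<Sum>i<N. x $ i * coeff (gs!i) n) = coeff p n"
      by (simp add: mult.commute atLeast0LessThan)
  qed
  show ?thesis
  proof (intro exI[of _ "\<lambda>i. x $ i"] poly_eqI)
    fix n
    show "coeff p n = coeff (\<Sum>i<length gs. Polynomial.smult (x $ i) (gs ! i)) n"
    proof (cases "n < D")
      case True
      then show ?thesis using coeq[OF True] by (simp add: coeff_sum N_def)
    next
      case False
      hence "n > d" unfolding D_def by simp
      hence "coeff p n = 0" using dp by (simp add: coeff_eq_0)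
      moreover have "\<forall>i<length gs. coeff (gs!i) n = 0" using deg \<open>n > d\<close>
        by (auto intro!: coeff_eq_0 dest!: nth_mem[of _ gs] elim: order.trans[rotated] simp: le_less_trans)
      ultimately show ?thesis by (simp add: coeff_sum)
    qed
  qed
qed

lemma dual_span_set:
  fixes I :: "'i set" and g :: "'i \<Rightarrow> real poly" and d :: nat and p :: "real poly"
  assumes fin: "finite I" and deg: "\<forall>i\<in>I. degree (g i) \<le> d"
    and nondeg: "\<And>y. (\<forall>i\<in>I. (\<Sum>n\<le>d. y n * coeff (g i) n) = 0) \<Longrightarrow> \<forall>n\<le>d. y n = 0"
    and dp: "degree p \<le> d"
  shows "\<exists>c. p = (\<Sum>i\<in>I. Polynomial.smult (c i) (g i))"
proof -
  obtain xs where xs: "set xs = I" "distinct xs" using finite_distinct_list[OF fin] by auto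
  have "\<exists>c. p = (\<Sum>i<length (map g xs). Polynomial.smult (c i) ((map g xs)!i))"
  proof (rule dual_span)
    show "\<forall>g\<in>set (map g xs). degree g \<le> d" using deg xs by auto
    show "degree p \<le> d" by (rule dp)
    fix y assume "\<forall>h\<in>set (map g xs). (\<Sum>n\<le>d. y n * coeff h n) = 0"
    hence "\<forall>i\<in>I. (\<Sum>n\<le>d. y n * coeff (g i) n) = 0" using xs by auto
    thus "\<forall>n\<le>d. y n = 0" by (rule nondeg)
  qed
  then obtain c where c: "p = (\<Sum>i<length xs. Polynomial.smult (c i) (g (xs!i)))" by auto
  have bij: "bij_betw ((!) xs) {..<length xs} I" using xs
    by (metis atLeast0LessThan bij_betw_nth)
  define c' where "c' = (\<lambda>x. c (inv_into {..<length xs} ((!) xs) x))"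
  have "(\<Sum>i\<in>I. Polynomial.smult (c' i) (g i)) = (\<Sum>i<length xs. Polynomial.smult (c' (xs!i)) (g (xs!i)))"
    using sum.reindex_bij_betw[OF bij, of "\<lambda>i. Polynomial.smult (c' i) (g i)"] by simp
  also have "\<dots> = (\<Sum>i<length xs. Polynomial.smult (c i) (g (xs!i)))"
    apply (rule sum.cong, simp)
    unfolding c'_def using bij by (simp add: bij_betw_inv_into_left)
  finally show ?thesis using c by (intro exI[of _ c']) simp
qed

lemma coeff_lin_pow: "coeff ([:c, 1:] ^ k) n = (if n \<le> k then of_nat (k choose n) * (c::real) ^ (k - n) else 0)"
  by (auto simp: coeff_linear_poly_power coeff_eq_0 degree_linear_power)

lemma coprime_lin_pow:
  fixes a b :: real assumes "a \<noteq> b"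
  shows "coprime ([:-a,1:]^s) ([:-b,1:]^t)"
proof -
  have "coprime [:-a,1:] [:-b,1:]"
  proof (rule coprimeI)
    fix c assume "c dvd [:-a,1:]" "c dvd [:-b,1:]"
    hence "c dvd [:-a,1:] - [:-b,1:]" by (rule dvd_diff)
    hence "c dvd Polynomial.smult (1/(b-a)) ([:-a,1:] - [:-b,1:])"
      by (rule dvd_smult)
    also have "Polynomial.smult (1/(b-a)) ([:-a,1:] - [:-b,1:]) = 1" using assms
      by (simp add: one_pCons field_simps)
    finally show "is_unit c" by simp
  qed
  thus ?thesis by simp
qed

lemma prod_lin_pow_dvd:
  fixes A :: "real set"
  assumes "finite A" "\<forall>a\<in>A. [:-a,1:]^s dvd q"
  shows "(\<Prod>a\<in>A. [:-a,1:]^s) dvd q"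
  using assms
proof (induction A rule: finite_induct)
  case empty then show ?case by simp
next
  case (insert a A)
  have "coprime ([:-a,1:]^s) (\<Prod>b\<in>A. [:-b,1:]^s)"
    using insert(2) by (intro prod_coprime_right coprime_lin_pow) auto
  then show ?case using insert by (simp add: divides_mult)
qed


lemma binom_shift_coeff:
  fixes a z :: real
  shows "coeff ([:-z,1:]^d) n = (\<Sum>j\<le>d. of_nat (d choose j) * (a - z)^j * coeff ([:-a,1:]^(d-j)) n)"
proof -
  have "[:-z,1:]^d = ([:a - z:] + [:-a,1:])^d" by simp
  also have "\<dots> = (\<Sum>j\<le>d. of_nat (d choose j) * [:a - z:]^j * [:-a,1:]^(d-j))"
    by (rule binomial_ring)
  also have "\<dots> = (\<Sum>j\<le>d. Polynomial.smult (of_nat (d choose j) * (a - z)^j) ([:-a,1:]^(d-j)))"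
    apply (rule sum.cong, simp)
    proof -
      fix j
      have e: "[:a - z:]^j = [:(a - z)^j:]" by (induction j) (auto simp: algebra_simps)
      show "of_nat (d choose j) * [:a - z:]^j * [:-a,1:]^(d-j) = Polynomial.smult (of_nat (d choose j) * (a - z)^j) ([:-a,1:]^(d-j))"
        unfolding e of_nat_poly by (simp add: mult.commute)
    qed
  finally show ?thesis by (simp add: coeff_sum)
qed

lemma phi_taylor:
  fixes y :: "nat \<Rightarrow> real" and a :: real and d :: nat
  defines "\<phi> \<equiv> (\<Sum>n\<le>d. monom (y n * of_nat (d choose n) * (-1)^(d-n)) (d-n))"
  shows "\<phi> = (\<Sum>j\<le>d. Polynomial.smult (of_nat (d choose j) * (-1)^j *
              (\<Sum>n\<le>d. y n * coeff ([:-a,1:]^(d-j)) n)) ([:-a,1:]^j))"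
proof -
  have "poly \<phi> z = poly (\<Sum>j\<le>d. Polynomial.smult (of_nat (d choose j) * (-1)^j *
              (\<Sum>n\<le>d. y n * coeff ([:-a,1:]^(d-j)) n)) ([:-a,1:]^j)) z" for z
  proof -
    have "poly \<phi> z = (\<Sum>n\<le>d. y n * coeff ([:-z,1:]^d) n)"
      unfolding \<phi>_def poly_sum poly_monom
      by (rule sum.cong) (auto simp: coeff_lin_pow power_mult_distrib power_minus[of z])
    also have "\<dots> = (\<Sum>n\<le>d. y n * (\<Sum>j\<le>d. of_nat (d choose j) * (a - z)^j * coeff ([:-a,1:]^(d-j)) n))"
      by (simp add: binom_shift_coeff[of z d _ a])
    also have "\<dots> = (\<Sum>j\<le>d. of_nat (d choose j) * (a - z)^j * (\<Sum>n\<le>d. y n * coeff ([:-a,1:]^(d-j)) n))"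
      apply (simp add: sum_distrib_left sum_distrib_right)
      apply (subst sum.swap)
      apply (rule sum.cong, simp, rule sum.cong, simp)
      by (simp add: mult_ac)
    also have "\<dots> = poly (\<Sum>j\<le>d. Polynomial.smult (of_nat (d choose j) * (-1)^j *
              (\<Sum>n\<le>d. y n * coeff ([:-a,1:]^(d-j)) n)) ([:-a,1:]^j)) z"
      unfolding poly_sum
      by (rule sum.cong) (simp_all add: poly_power power_mult_distrib[symmetric] mult_ac)
    finally show ?thesis .
  qed
  thus ?thesis by (intro poly_ext) auto
qed


definition hgen :: "nat \<Rightarrow> real option \<times> nat \<Rightarrow> real poly" where
  "hgen d x = (case x of (Some a, j) \<Rightarrow> [:-a,1:]^(d-j) | (None, j) \<Rightarrow> monom 1 j)"

lemma coeff_phi: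
  fixes y :: "nat \<Rightarrow> real"
  shows "coeff (\<Sum>n\<le>d. monom (y n * of_nat (d choose n) * (-1)^(d-n)) (d-n)) k =
     (if k \<le> d then y (d-k) * of_nat (d choose (d-k)) * (-1)^k else 0)"
proof -
  have "coeff (\<Sum>n\<le>d. monom (y n * of_nat (d choose n) * (-1)^(d-n)) (d-n)) k =
     (\<Sum>n\<le>d. if d - n = k then y n * of_nat (d choose n) * (-1)^(d-n) else 0)"
    by (simp add: coeff_sum coeff_monom)
  also have "\<dots> = (\<Sum>n\<in>(if k \<le> d then {d-k} else {}). y n * of_nat (d choose n) * (-1)^(d-n))"
    by (rule sum.mono_neutral_cong_right) (auto split: if_splits)
  finally show ?thesis by auto
qed

lemma claimH:
  fixes P :: "real option set" and s d :: nat and p :: "real poly"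
  assumes fin: "finite P" and s1: "1 \<le> s" and sd: "s \<le> d + 1"
    and cnt: "d + 1 \<le> s * card P" and dp: "degree p \<le> d"
  shows "\<exists>c. p = (\<Sum>i\<in>P \<times> {..<s}. Polynomial.smult (c i) (hgen d i))"
proof (rule dual_span_set)
  show "finite (P \<times> {..<s})" using fin by simp
  show "degree p \<le> d" by (rule dp)
  show "\<forall>i\<in>P \<times> {..<s}. degree (hgen d i) \<le> d"
    using sd by (auto simp: hgen_def degree_linear_power degree_monom_eq split: option.splits)
  fix y :: "nat \<Rightarrow> real"
  assume orth: "\<forall>i\<in>P \<times> {..<s}. (\<Sum>n\<le>d. y n * coeff (hgen d i) n) = 0"
  define \<phi> where "\<phi> = (\<Sum>n\<le>d. monom (y n * of_nat (d choose n) * (-1)^(d-n)) (d-n))"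
  define A where "A = {a. Some a \<in> P}"
  have finA: "finite A" unfolding A_def using fin
    by (metis finite_vimageI inj_Some vimage_def)
  have dvd1: "\<forall>a\<in>A. [:-a,1:]^s dvd \<phi>"
  proof
    fix a assume a: "a \<in> A"
    have Y0: "\<And>j. j < s \<Longrightarrow> (\<Sum>n\<le>d. y n * coeff ([:-a,1:]^(d-j)) n) = 0"
      using orth a unfolding A_def hgen_def by auto
    have "\<phi> = (\<Sum>j\<le>d. Polynomial.smult (of_nat (d choose j) * (-1)^j *
              (\<Sum>n\<le>d. y n * coeff ([:-a,1:]^(d-j)) n)) ([:-a,1:]^j))"
      unfolding \<phi>_def by (rule phi_taylor)
    also have "[:-a,1:]^s dvd \<dots>"
    proof (rule dvd_sum)
      fix j assume "j \<in> {..d}"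
      show "[:-a,1:]^s dvd Polynomial.smult (of_nat (d choose j) * (-1)^j *
              (\<Sum>n\<le>d. y n * coeff ([:-a,1:]^(d-j)) n)) ([:-a,1:]^j)"
      proof (cases "j < s")
        case True then show ?thesis using Y0 by simp
      next
        case False
        hence "[:-a,1:]^s dvd [:-a,1:]^j" by (simp add: le_imp_power_dvd)
        then show ?thesis by (rule dvd_smult)
      qed
    qed
    finally show "[:-a,1:]^s dvd \<phi>" .
  qed
  have pd: "(\<Prod>a\<in>A. [:-a,1:]^s) dvd \<phi>" by (rule prod_lin_pow_dvd[OF finA dvd1])
  have degprod: "degree (\<Prod>a\<in>A. [:-a,1:]^s) = s * card A"
    by (subst degree_prod_eq_sum_degree) (auto simp: degree_linear_power)
  have cardP: "card P = card A + (if None \<in> P then 1 else 0)"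
  proof -
    have "P = Some ` A \<union> (if None \<in> P then {None} else {})" unfolding A_def
      apply (auto split: if_splits)
      by (metis (mono_tags) option.exhaust imageI mem_Collect_eq)+
    moreover have "card (Some ` A \<union> (if None \<in> P then {None} else {})) = card A + (if None \<in> P then 1 else 0)"
      using finA by (auto simp: card_image)
    ultimately show ?thesis by simp
  qed
  have degphi: "degree \<phi> \<le> d" unfolding \<phi>_def
    by (rule degree_sum_le) (auto intro: order.trans[OF degree_monom_le])
  have phi0: "\<phi> = 0"
  proof (rule ccontr)
    assume nz: "\<phi> \<noteq> 0"
    have "s * card A \<le> degree \<phi>" using dvd_imp_degree_le[OF pd nz] degprod by simp
    show False
    proof (cases "None \<in> P")
      case True
      have yz: "\<And>j. j < s \<Longrightarrow> y j = 0"
      proof -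
        fix j assume j: "j < s"
        have "(\<Sum>n\<le>d. y n * coeff (monom 1 j) n) = 0" using orth True j unfolding hgen_def by auto
        moreover have "(\<Sum>n\<le>d. y n * coeff (monom 1 j) n) = y j"
        proof -
          have "(\<Sum>n\<le>d. y n * coeff (monom 1 j) n) = (\<Sum>n\<le>d. if n = j then y j else 0)"
            by (rule sum.cong) (auto simp: coeff_monom)
          also have "\<dots> = y j" using j sd by simp
          finally show ?thesis .
        qed
        ultimately show "y j = 0" by simp
      qed
      have "degree \<phi> + s \<le> d"
      proof (rule ccontr)
        assume "\<not> degree \<phi> + s \<le> d"
        hence "coeff \<phi> (degree \<phi>) = 0"
          unfolding \<phi>_def coeff_phi using yz by auto
        thus False using nz by simp
      qed
      then show False using \<open>s * card A \<le> degree \<phi>\<close> cnt cardP True s1 sd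
        by (simp add: algebra_simps)
    next
      case False
      then show False using \<open>s * card A \<le> degree \<phi>\<close> cnt cardP degphi by simp
    qed
  qed
  show "\<forall>n\<le>d. y n = 0"
  proof (intro allI impI)
    fix n assume n: "n \<le> d"
    have "coeff \<phi> (d - n) = 0" using phi0 by simp
    hence "y n * of_nat (d choose n) * (-1)^(d-n) = 0"
      unfolding \<phi>_def coeff_phi using n by simp
    thus "y n = 0" using n by simp
  qed
qed

lemma Pm_iff: "p \<in> Pm m \<longleftrightarrow> (\<exists>c. \<forall>x y. p (x, y) = (\<Sum>i\<le>m. \<Sum>j\<le>m - i. c i j * x ^ i * y ^ j))"
  unfolding Pm_def by simp

lemma Pm_zero: "(\<lambda>z. 0) \<in> Pm m"
  unfolding Pm_iff by (intro exI[of _ "\<lambda>i j. 0"]) simp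

lemma Pm_add: "p \<in> Pm m \<Longrightarrow> q \<in> Pm m \<Longrightarrow> (\<lambda>z. p z + q z) \<in> Pm m"
  unfolding Pm_iff
  apply (elim exE)
  subgoal for c d by (intro exI[of _ "\<lambda>i j. c i j + d i j"]) (simp add: algebra_simps sum.distrib)
  done

lemma Pm_scale: "p \<in> Pm m \<Longrightarrow> (\<lambda>z. a * p z) \<in> Pm m"
  unfolding Pm_iff
  apply (elim exE)
  subgoal for c by (intro exI[of _ "\<lambda>i j. a * c i j"]) (simp add: algebra_simps sum_distrib_left)
  done

lemma Pm_sum: "finite S \<Longrightarrow> (\<And>i. i \<in> S \<Longrightarrow> f i \<in> Pm m) \<Longrightarrow> (\<lambda>z. \<Sum>i\<in>S. f i z) \<in> Pm m"
proof (induction S rule: finite_induct)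
  case empty then show ?case by (simp add: Pm_zero)
next
  case (insert x F)
  then show ?case using Pm_add[of "f x" m "\<lambda>z. \<Sum>i\<in>F. f i z"] by simp
qed

lemma Pm_neg: "p \<in> Pm m \<Longrightarrow> (\<lambda>z. - p z) \<in> Pm m"
  using Pm_scale[of p m "-1"] by simp

lemma Pm_diff: "p \<in> Pm m \<Longrightarrow> q \<in> Pm m \<Longrightarrow> (\<lambda>z. p z - q z) \<in> Pm m"
  using Pm_add[OF _ Pm_neg, of p m q] by simp

lemma Pm_monomial:
  assumes "i + j \<le> m"
  shows "(\<lambda>z. fst z ^ i * snd z ^ j) \<in> Pm m"
  unfolding Pm_iff
proof (intro exI[of _ "\<lambda>i' j'. if i' = i \<and> j' = j then 1 else 0"] allI)
  fix x y :: real
  have "(\<Sum>i'\<le>m. \<Sum>j'\<le>m - i'. (if i' = i \<and> j' = j then 1 else 0) * x ^ i' * y ^ j') =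
        (\<Sum>i'\<le>m. if i' = i then x ^ i * y ^ j else 0)"
  proof (rule sum.cong, simp)
    fix i' assume "i' \<in> {..m}"
    show "(\<Sum>j'\<le>m - i'. (if i' = i \<and> j' = j then 1 else 0) * x ^ i' * y ^ j') = (if i' = i then x ^ i * y ^ j else 0)"
    proof (cases "i' = i")
      case True
      have "(\<Sum>j'\<le>m - i'. (if i' = i \<and> j' = j then 1 else 0) * x ^ i' * y ^ j') = (\<Sum>j'\<le>m - i. if j' = j then x ^ i * y ^ j else 0)"
        by (rule sum.cong) (auto simp: True)
      also have "\<dots> = x ^ i * y ^ j" using assms by simp
      finally show ?thesis using True by simp
    next
      case False then show ?thesis by simp
    qed
  qed
  also have "\<dots> = x ^ i * y ^ j" using assms by simp
  finally show "fst (x, y) ^ i * snd (x, y) ^ j = (\<Sum>i'\<le>m. \<Sum>j'\<le>m - i'. (if i' = i \<and> j' = j then 1 else 0) * x ^ i' * y ^ j')"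
    by simp
qed

lemma Pm_repr:
  assumes "p \<in> Pm m"
  obtains c where "\<And>z. p z = (\<Sum>i\<le>m. \<Sum>j\<le>m - i. c i j * fst z ^ i * snd z ^ j)"
proof -
  from assms obtain c where c: "\<And>x y. p (x, y) = (\<Sum>i\<le>m. \<Sum>j\<le>m - i. c i j * x ^ i * y ^ j)"
    unfolding Pm_iff by blast
  have "\<And>z. p z = (\<Sum>i\<le>m. \<Sum>j\<le>m - i. c i j * fst z ^ i * snd z ^ j)"
    using c by (metis prod.collapse)
  then show ?thesis by (rule that)
qed

lemma Pm_ext: "p \<in> Pm m \<Longrightarrow> (\<And>z. q z = p z) \<Longrightarrow> q \<in> Pm m"
proof -
  assume "p \<in> Pm m" "\<And>z. q z = p z"
  then have "q = p" by auto
  with \<open>p \<in> Pm m\<close> show ?thesis by simp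
qed

lemma Pm_mono: assumes "p \<in> Pm m" "m \<le> m'" shows "p \<in> Pm m'"
proof -
  obtain c where c: "\<And>z. p z = (\<Sum>i\<le>m. \<Sum>j\<le>m - i. c i j * fst z ^ i * snd z ^ j)"
    using Pm_repr[OF assms(1)] by blast
  have "(\<lambda>z. \<Sum>i\<le>m. \<Sum>j\<le>m - i. c i j * (fst z ^ i * snd z ^ j)) \<in> Pm m'"
    using assms(2)
    by (intro Pm_sum Pm_scale Pm_monomial) auto
  then show ?thesis by (rule Pm_ext) (simp add: c mult.assoc)
qed

lemma Pm_const: "(\<lambda>z. a) \<in> Pm m"
  using Pm_scale[OF Pm_monomial[of 0 0 m], of a] by simp

lemma Pm_fst: "1 \<le> m \<Longrightarrow> (\<lambda>z. fst z) \<in> Pm m"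
  using Pm_monomial[of 1 0 m] by simp

lemma Pm_snd: "1 \<le> m \<Longrightarrow> (\<lambda>z. snd z) \<in> Pm m"
  using Pm_monomial[of 0 1 m] by simp

lemma Pm_mult:
  assumes "p \<in> Pm a" "q \<in> Pm b"
  shows "(\<lambda>z. p z * q z) \<in> Pm (a + b)"
proof -
  obtain c where c: "\<And>z. p z = (\<Sum>i\<le>a. \<Sum>j\<le>a - i. c i j * fst z ^ i * snd z ^ j)"
    using Pm_repr[OF assms(1)] by blast
  obtain d where d: "\<And>z. q z = (\<Sum>k\<le>b. \<Sum>l\<le>b - k. d k l * fst z ^ k * snd z ^ l)"
    using Pm_repr[OF assms(2)] by blast
  have "(\<lambda>z. \<Sum>i\<le>a. \<Sum>j\<le>a - i. \<Sum>k\<le>b. \<Sum>l\<le>b - k. (c i j * d k l) * (fst z ^ (i + k) * snd z ^ (j + l))) \<in> Pm (a + b)"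
    by (intro Pm_sum Pm_scale Pm_monomial) auto
  moreover have "p z * q z = (\<Sum>i\<le>a. \<Sum>j\<le>a - i. \<Sum>k\<le>b. \<Sum>l\<le>b - k. (c i j * d k l) * (fst z ^ (i + k) * snd z ^ (j + l)))" for z
  proof -
    have "p z * q z = (\<Sum>i\<le>a. \<Sum>j\<le>a - i. (c i j * fst z ^ i * snd z ^ j) * q z)"
      by (simp add: c sum_distrib_right)
    also have "\<dots> = (\<Sum>i\<le>a. \<Sum>j\<le>a - i. \<Sum>k\<le>b. \<Sum>l\<le>b - k. (c i j * fst z ^ i * snd z ^ j) * (d k l * fst z ^ k * snd z ^ l))"
      by (simp only: d sum_distrib_left)
    also have "\<dots> = (\<Sum>i\<le>a. \<Sum>j\<le>a - i. \<Sum>k\<le>b. \<Sum>l\<le>b - k. (c i j * d k l) * (fst z ^ (i + k) * snd z ^ (j + l)))"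
      by (intro sum.cong refl) (simp add: power_add mult_ac)
    finally show ?thesis .
  qed
  ultimately show ?thesis by (rule Pm_ext)
qed

lemma Pm_pow: "p \<in> Pm a \<Longrightarrow> (\<lambda>z. p z ^ k) \<in> Pm (a * k)"
proof (induction k)
  case 0 then show ?case using Pm_const[of 1] by simp
next
  case (Suc k)
  then show ?case using Pm_mult[OF Suc.prems Suc.IH] by (simp add: algebra_simps)
qed

lemma Pm_poly_fun: "p \<in> Pm m \<Longrightarrow> poly_fun p"
proof -
  assume "p \<in> Pm m"
  then obtain c where c: "\<And>x y. p (x, y) = (\<Sum>i\<le>m. \<Sum>j\<le>m - i. c i j * x ^ i * y ^ j)"
    unfolding Pm_iff by blast
  show ?thesis unfolding poly_fun_def
  proof (intro exI[of _ "\<lambda>i j. if j \<le> m - i then c i j else 0"] exI[of _ m] allI)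
    fix x y :: real
    have "(\<Sum>i\<le>m. \<Sum>j\<le>m. (if j \<le> m - i then c i j else 0) * x ^ i * y ^ j) =
          (\<Sum>i\<le>m. \<Sum>j\<le>m - i. c i j * x ^ i * y ^ j)"
    proof (rule sum.cong, simp)
      fix i assume "i \<in> {..m}"
      show "(\<Sum>j\<le>m. (if j \<le> m - i then c i j else 0) * x ^ i * y ^ j) = (\<Sum>j\<le>m - i. c i j * x ^ i * y ^ j)"
        by (rule sum.mono_neutral_cong_right) auto
    qed
    then show "p (x, y) = (\<Sum>i\<le>m. \<Sum>j\<le>m. (if j \<le> m - i then c i j else 0) * x ^ i * y ^ j)"
      using c by simp
  qed
qed

definition affine_fun :: "(pt \<Rightarrow> real) \<Rightarrow> bool" where
  "affine_fun f \<longleftrightarrow> (\<exists>a b c. \<forall>z. f z = a + b * fst z + c * snd z)"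

lemma affine_fun_Pm: "affine_fun f \<Longrightarrow> f \<in> Pm 1"
proof -
  assume "affine_fun f"
  then obtain a b c where f: "\<And>z. f z = a + b * fst z + c * snd z" unfolding affine_fun_def by blast
  have "(\<lambda>z. a + b * fst z + c * snd z) \<in> Pm 1"
    by (intro Pm_add Pm_const Pm_scale Pm_fst Pm_snd) auto
  then show ?thesis using f by (rule Pm_ext)
qed


definition bc :: "pt \<Rightarrow> pt \<Rightarrow> pt \<Rightarrow> pt \<Rightarrow> real" where
  "bc a b c z = det2 (b - z) (c - z) / det2 (b - a) (c - a)"

lemma det2_cyc: "det2 (c - b) (a - b) = det2 (b - a) (c - a)" "det2 (a - c) (b - c) = det2 (b - a) (c - a)"
  by (simp_all add: det2_def algebra_simps)

lemma num_sum: "det2 (b - z) (c - z) + det2 (c - z) (a - z) + det2 (a - z) (b - z) = det2 (b - a) (c - a)"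
  by (simp add: det2_def algebra_simps)

lemma num_fst: "fst a * det2 (b - z) (c - z) + fst b * det2 (c - z) (a - z) + fst c * det2 (a - z) (b - z) = fst z * det2 (b - a) (c - a)"
  by (simp add: det2_def algebra_simps)

lemma num_snd: "snd a * det2 (b - z) (c - z) + snd b * det2 (c - z) (a - z) + snd c * det2 (a - z) (b - z) = snd z * det2 (b - a) (c - a)"
  by (simp add: det2_def algebra_simps)

lemma bc_cyc: "bc b c a z = det2 (c - z) (a - z) / det2 (b - a) (c - a)"
  "bc c a b z = det2 (a - z) (b - z) / det2 (b - a) (c - a)"
  unfolding bc_def by (simp_all add: det2_cyc)

lemma bc_sum: assumes "det2 (b - a) (c - a) \<noteq> 0"
  shows "bc a b c z + bc b c a z + bc c a b z = 1"
  using assms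
  by (simp add: bc_def det2_cyc(1)[where a=a and b=b and c=c] det2_cyc(2)[where a=a and b=b and c=c] add_divide_distrib[symmetric] num_sum)

lemma bc_fst: assumes "det2 (b - a) (c - a) \<noteq> 0"
  shows "fst a * bc a b c z + fst b * bc b c a z + fst c * bc c a b z = fst z"
proof -
  have "fst a * bc a b c z + fst b * bc b c a z + fst c * bc c a b z =
    (fst a * det2 (b - z) (c - z) + fst b * det2 (c - z) (a - z) + fst c * det2 (a - z) (b - z)) / det2 (b - a) (c - a)"
    by (simp add: bc_def det2_cyc(1)[where a=a and b=b and c=c] det2_cyc(2)[where a=a and b=b and c=c] add_divide_distrib)
  also have "\<dots> = fst z" using assms by (simp add: num_fst)
  finally show ?thesis .
qed

lemma bc_snd: assumes "det2 (b - a) (c - a) \<noteq> 0"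
  shows "snd a * bc a b c z + snd b * bc b c a z + snd c * bc c a b z = snd z"
proof -
  have "snd a * bc a b c z + snd b * bc b c a z + snd c * bc c a b z =
    (snd a * det2 (b - z) (c - z) + snd b * det2 (c - z) (a - z) + snd c * det2 (a - z) (b - z)) / det2 (b - a) (c - a)"
    by (simp add: bc_def det2_cyc(1)[where a=a and b=b and c=c] det2_cyc(2)[where a=a and b=b and c=c] add_divide_distrib)
  also have "\<dots> = snd z" using assms by (simp add: num_snd)
  finally show ?thesis .
qed

lemma bc_vert: assumes "det2 (b - a) (c - a) \<noteq> 0"
  shows "bc a b c a = 1" "bc a b c b = 0" "bc a b c c = 0"
  using assms unfolding bc_def by (simp_all add: det2_def)

lemma bc_affine: "affine_fun (bc a b c)"
  unfolding affine_fun_def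
proof (intro exI allI)
  fix z
  define D where "D = det2 (b - a) (c - a)"
  show "bc a b c z = (fst b * snd c - snd b * fst c) / D + (- (snd c - snd b) / D) * fst z + (- (fst b - fst c) / D) * snd z"
    unfolding bc_def D_def[symmetric]
    by (simp add: det2_def diff_divide_distrib add_divide_distrib algebra_simps)
qed

lemma affine_bc_expand:
  assumes "det2 (b - a) (c - a) \<noteq> 0" "affine_fun f"
  shows "f z = f a * bc a b c z + f b * bc b c a z + f c * bc c a b z"
proof -
  obtain p q r where f: "\<And>z. f z = p + q * fst z + r * snd z" using assms(2) unfolding affine_fun_def by blast
  have "f a * bc a b c z + f b * bc b c a z + f c * bc c a b z =
     p * (bc a b c z + bc b c a z + bc c a b z) + q * (fst a * bc a b c z + fst b * bc b c a z + fst c * bc c a b z)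
     + r * (snd a * bc a b c z + snd b * bc b c a z + snd c * bc c a b z)"
    unfolding f by (simp add: algebra_simps)
  also have "\<dots> = f z" using assms(1) by (simp add: bc_sum bc_fst bc_snd f)
  finally show ?thesis by simp
qed


definition closedW :: "(pt \<Rightarrow> real) set \<Rightarrow> bool" where
  "closedW W \<longleftrightarrow> (\<lambda>z. 0) \<in> W \<and> (\<forall>p\<in>W. \<forall>q\<in>W. (\<lambda>z. p z + q z) \<in> W) \<and> (\<forall>p\<in>W. \<forall>a. (\<lambda>z. a * p z) \<in> W)"

lemma closedW_sum: assumes "closedW W" "finite S" "\<And>i. i \<in> S \<Longrightarrow> f i \<in> W" shows "(\<lambda>z. \<Sum>i\<in>S. f i z) \<in> W"
  using assms(2,3) proof (induction S rule: finite_induct)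
  case empty then show ?case using assms(1) unfolding closedW_def by simp
next
  case (insert x F)
  then show ?case using assms(1) unfolding closedW_def by simp
qed

lemma closedW_ext: "p \<in> W \<Longrightarrow> (\<And>z. q z = p z) \<Longrightarrow> q \<in> W"
proof -
  assume "p \<in> W" "\<And>z. q z = p z"
  then have "q = p" by auto
  with \<open>p \<in> W\<close> show ?thesis by simp
qed

lemma bernstein:
  fixes a b c :: pt and W :: "(pt \<Rightarrow> real) set" and m :: nat
  assumes D: "det2 (b - a) (c - a) \<noteq> 0" and W: "closedW W"
    and mono: "\<And>i j k. i + j + k = m \<Longrightarrow> (\<lambda>z. bc a b c z ^ i * bc b c a z ^ j * bc c a b z ^ k) \<in> W"
    and p: "p \<in> Pm m"
  shows "p \<in> W"
proof -
  define G where "G n = {p. \<forall>i j k. i + j + k + n = m \<longrightarrow> (\<lambda>z. p z * (bc a b c z ^ i * bc b c a z ^ j * bc c a b z ^ k)) \<in> W}" for n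
  have G0: "(\<lambda>z. 1) \<in> G 0" unfolding G_def using mono by simp
  have Gstep: "(\<lambda>z. q z * L z) \<in> G (Suc n)" if q: "q \<in> G n" and L: "affine_fun L" for q L n
    unfolding G_def
  proof (intro CollectI allI impI)
    fix i j k assume ijk: "i + j + k + Suc n = m"
    let ?M = "\<lambda>i j k z. bc a b c z ^ i * bc b c a z ^ j * bc c a b z ^ k"
    have qG: "\<And>i j k. i + j + k + n = m \<Longrightarrow> (\<lambda>z. q z * ?M i j k z) \<in> W" using q unfolding G_def by blast
    have m1: "(\<lambda>z. q z * ?M (Suc i) j k z) \<in> W" using qG[of "Suc i" j k] ijk by simp
    have m2: "(\<lambda>z. q z * ?M i (Suc j) k z) \<in> W" using qG[of i "Suc j" k] ijk by simp
    have m3: "(\<lambda>z. q z * ?M i j (Suc k) z) \<in> W" using qG[of i j "Suc k"] ijk by simp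
    have "(\<lambda>z. L a * (q z * ?M (Suc i) j k z) + L b * (q z * ?M i (Suc j) k z) + L c * (q z * ?M i j (Suc k) z)) \<in> W"
      using W m1 m2 m3 unfolding closedW_def by simp
    then show "(\<lambda>z. q z * L z * ?M i j k z) \<in> W"
    proof (rule closedW_ext)
      fix z
      have "L z = L a * bc a b c z + L b * bc b c a z + L c * bc c a b z"
        by (rule affine_bc_expand[OF D L])
      then show "q z * L z * ?M i j k z = L a * (q z * ?M (Suc i) j k z) + L b * (q z * ?M i (Suc j) k z) + L c * (q z * ?M i j (Suc k) z)"
        by (simp add: algebra_simps)
    qed
  qed
  have Gpow: "(\<lambda>z. q z * L z ^ k) \<in> G (n + k)" if q: "q \<in> G n" and L: "affine_fun L" for q L n k
  proof (induction k)
    case 0 then show ?case using q by simp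
  next
    case (Suc k)
    from Gstep[OF Suc L] show ?case by (simp add: mult_ac)
  qed
  have aff_fst: "affine_fun (\<lambda>z. fst z)" unfolding affine_fun_def by (intro exI[of _ 0] exI[of _ 1] exI[of _ 0]) simp
  have aff_snd: "affine_fun (\<lambda>z. snd z)" unfolding affine_fun_def by (intro exI[of _ 0] exI[of _ 0] exI[of _ 1]) simp
  have aff_one: "affine_fun (\<lambda>z. 1)" unfolding affine_fun_def by (intro exI[of _ 1] exI[of _ 0] exI[of _ 0]) simp
  have monW: "(\<lambda>z. fst z ^ i * snd z ^ j) \<in> W" if ij: "i + j \<le> m" for i j
  proof -
    have "(\<lambda>z. 1 * fst z ^ i) \<in> G (0 + i)" by (rule Gpow[OF G0 aff_fst])
    hence "(\<lambda>z. (1 * fst z ^ i) * snd z ^ j) \<in> G (i + j)" using Gpow[OF _ aff_snd] by simp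
    hence "(\<lambda>z. ((1 * fst z ^ i) * snd z ^ j) * 1 ^ (m - (i + j))) \<in> G (i + j + (m - (i + j)))"
      using Gpow[OF _ aff_one] by blast
    hence "(\<lambda>z. fst z ^ i * snd z ^ j) \<in> G m" using ij by simp
    hence "(\<lambda>z. (fst z ^ i * snd z ^ j) * (bc a b c z ^ 0 * bc b c a z ^ 0 * bc c a b z ^ 0)) \<in> W"
      unfolding G_def by auto
    then show ?thesis by simp
  qed
  obtain cf where cf: "\<And>z. p z = (\<Sum>i\<le>m. \<Sum>j\<le>m - i. cf i j * fst z ^ i * snd z ^ j)"
    using Pm_repr[OF p] by blast
  have "(\<lambda>z. \<Sum>i\<le>m. \<Sum>j\<le>m - i. cf i j * (fst z ^ i * snd z ^ j)) \<in> W"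
    using W monW unfolding closedW_def
    by (intro closedW_sum[OF W] finite_atMost) (auto)
  then show ?thesis by (rule closedW_ext) (simp add: cf mult.assoc)
qed


definition hom :: "nat \<Rightarrow> real poly \<Rightarrow> (pt \<Rightarrow> real) \<Rightarrow> (pt \<Rightarrow> real) \<Rightarrow> pt \<Rightarrow> real" where
  "hom d p U V z = (\<Sum>n\<le>d. coeff p n * U z ^ n * V z ^ (d - n))"

lemma hom_sum: "hom d (\<Sum>i\<in>I. Polynomial.smult (c i) (g i)) U V z = (\<Sum>i\<in>I. c i * hom d (g i) U V z)"
  unfolding hom_def coeff_sum
  by (simp add: sum_distrib_left sum_distrib_right mult_ac sum.swap[of _ I])

lemma hom_monom: "j \<le> d \<Longrightarrow> hom d (monom 1 j) U V z = U z ^ j * V z ^ (d - j)"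
proof -
  assume j: "j \<le> d"
  have "hom d (monom 1 j) U V z = (\<Sum>n\<le>d. if n = j then U z ^ j * V z ^ (d - j) else 0)"
    unfolding hom_def by (rule sum.cong) (auto simp: coeff_monom)
  also have "\<dots> = U z ^ j * V z ^ (d - j)" using j by simp
  finally show ?thesis .
qed

lemma hom_lin: assumes k: "k \<le> d"
  shows "hom d ([:-\<alpha>,1:]^k) U V z = (U z - \<alpha> * V z)^k * V z^(d-k)"
proof -
  have "hom d ([:-\<alpha>,1:]^k) U V z = (\<Sum>n\<le>k. of_nat (k choose n) * (-\<alpha>)^(k-n) * U z ^ n * V z ^ (d - n))"
    unfolding hom_def coeff_lin_pow
    by (rule sum.mono_neutral_cong_right) (use k in auto)
  also have "\<dots> = (\<Sum>n\<le>k. of_nat (k choose n) * U z ^ n * (- \<alpha> * V z) ^ (k - n)) * V z^(d-k)"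
    unfolding sum_distrib_right
  proof (rule sum.cong, simp)
    fix n assume n: "n \<in> {..k}"
    have "V z ^ (d - n) = V z ^ (k - n) * V z ^ (d - k)" using n k by (simp flip: power_add)
    then show "of_nat (k choose n) * (-\<alpha>)^(k-n) * U z ^ n * V z ^ (d - n) = of_nat (k choose n) * U z ^ n * (- \<alpha> * V z) ^ (k - n) * V z^(d-k)"
      by (simp add: power_mult_distrib[symmetric] mult_ac)
  qed
  also have "\<dots> = (U z - \<alpha> * V z)^k * V z^(d-k)"
  proof -
    have bin: "(U z + (- (\<alpha> * V z)))^k = (\<Sum>n\<le>k. of_nat (k choose n) * U z ^ n * (- (\<alpha> * V z)) ^ (k - n))"
      by (rule binomial_ring)
    then show ?thesis by simp
  qed
  finally show ?thesis .
qed

definition lin_of :: "(pt \<Rightarrow> real) \<Rightarrow> (pt \<Rightarrow> real) \<Rightarrow> real option \<Rightarrow> pt \<Rightarrow> real" where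
  "lin_of U V w z = (case w of Some \<alpha> \<Rightarrow> U z - \<alpha> * V z | None \<Rightarrow> V z)"

lemma local_alg:
  fixes U V M :: "pt \<Rightarrow> real" and P :: "real option set" and R \<Omega> m a' :: nat and W
  assumes fin: "finite P" and R1: "1 \<le> R" and RO: "R \<le> \<Omega>" and Om: "\<Omega> \<le> m"
    and cnt: "\<Omega> + 1 \<le> (\<Omega> + 1 - R) * card P" and a': "a' \<le> \<Omega>"
    and W: "closedW W" and U: "U \<in> Pm 1" and V: "V \<in> Pm 1" and M: "M \<in> Pm (m - \<Omega>)"
    and hyp: "\<And>w G. w \<in> P \<Longrightarrow> G \<in> Pm (m - R) \<Longrightarrow> (\<lambda>z. lin_of U V w z ^ R * G z) \<in> W"
  shows "(\<lambda>z. U z ^ a' * V z ^ (\<Omega> - a') * M z) \<in> W"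
proof -
  define s where "s = \<Omega> + 1 - R"
  have "\<exists>c. monom 1 a' = (\<Sum>i\<in>P \<times> {..<s}. Polynomial.smult (c i) (hgen \<Omega> i))"
    by (rule claimH[OF fin]) (use R1 RO cnt a' in \<open>auto simp: s_def degree_monom_eq\<close>)
  then obtain c where
    c: "monom 1 a' = (\<Sum>i\<in>P \<times> {..<s}. Polynomial.smult (c i) (hgen \<Omega> i))" by blast
  have lin1: "(\<lambda>z. lin_of U V w z) \<in> Pm 1" for w
    unfolding lin_of_def using U V
    by (cases w) (auto intro: Pm_diff Pm_scale)
  have trm: "(\<lambda>z. c i * hom \<Omega> (hgen \<Omega> i) U V z * M z) \<in> W" if i: "i \<in> P \<times> {..<s}" for i
  proof -
    obtain w j where oj: "i = (w, j)" "w \<in> P" "j < s" using i by auto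
    have jR: "R \<le> \<Omega> - j" "j \<le> \<Omega>" using oj(3) unfolding s_def using RO by auto
    define G where "G = (\<lambda>z. c i * (case w of Some \<alpha> \<Rightarrow> (U z - \<alpha> * V z) ^ (\<Omega> - j - R) * V z ^ j
                                         | None \<Rightarrow> U z ^ j * V z ^ (\<Omega> - j - R)) * M z)"
    have "G \<in> Pm (m - R)"
    proof -
      have deg: "(\<Omega> - j - R) + j + (m - \<Omega>) = m - R" "j + (\<Omega> - j - R) + (m - \<Omega>) = m - R"
        using jR Om by auto
      show ?thesis
      proof (cases w)
        case None
        have "(\<lambda>z. (U z ^ j * V z ^ (\<Omega> - j - R)) * M z) \<in> Pm (j + (\<Omega> - j - R) + (m - \<Omega>))"
          using Pm_pow[OF U] Pm_pow[OF V] by (intro Pm_mult M) (simp_all)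
        then show ?thesis unfolding G_def None deg using Pm_scale by (simp add: mult.assoc)
      next
        case (Some \<alpha>)
        have "(\<lambda>z. U z - \<alpha> * V z) \<in> Pm 1" using U V by (intro Pm_diff Pm_scale)
        then have "(\<lambda>z. ((U z - \<alpha> * V z) ^ (\<Omega> - j - R) * V z ^ j) * M z) \<in> Pm ((\<Omega> - j - R) + j + (m - \<Omega>))"
          using Pm_pow[OF V] by (intro Pm_mult M) (auto dest: Pm_pow)
        then show ?thesis unfolding G_def Some deg using Pm_scale by (simp add: mult.assoc)
      qed
    qed
    from hyp[OF oj(2) this] have "(\<lambda>z. lin_of U V w z ^ R * G z) \<in> W" .
    then show ?thesis
    proof (rule closedW_ext)
      fix z
      show "c i * hom \<Omega> (hgen \<Omega> i) U V z * M z = lin_of U V w z ^ R * G z"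
      proof (cases w)
        case None
        have "V z ^ (\<Omega> - j) = V z ^ R * V z ^ (\<Omega> - j - R)" using jR by (simp flip: power_add)
        then show ?thesis unfolding G_def oj(1) None hgen_def lin_of_def using hom_monom[OF jR(2)]
          by (simp add: mult_ac)
      next
        case (Some \<alpha>)
        have "(U z - \<alpha> * V z) ^ (\<Omega> - j) = (U z - \<alpha> * V z) ^ R * (U z - \<alpha> * V z) ^ (\<Omega> - j - R)"
          using jR by (simp flip: power_add)
        moreover have "\<Omega> - (\<Omega> - j) = j" using jR by simp
        ultimately show ?thesis unfolding G_def oj(1) Some hgen_def lin_of_def using hom_lin[of "\<Omega> - j" \<Omega> \<alpha> U V z]
          by (simp add: mult_ac)
      qed
    qed
  qed
  have "(\<lambda>z. \<Sum>i\<in>P \<times> {..<s}. c i * hom \<Omega> (hgen \<Omega> i) U V z * M z) \<in> W"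
    by (rule closedW_sum[OF W]) (use fin trm in auto)
  then show ?thesis
  proof (rule closedW_ext)
    fix z
    have "U z ^ a' * V z ^ (\<Omega> - a') = hom \<Omega> (monom 1 a') U V z" using hom_monom[OF a'] by simp
    also have "\<dots> = (\<Sum>i\<in>P \<times> {..<s}. c i * hom \<Omega> (hgen \<Omega> i) U V z)" unfolding c hom_sum ..
    finally show "U z ^ a' * V z ^ (\<Omega> - a') * M z = (\<Sum>i\<in>P \<times> {..<s}. c i * hom \<Omega> (hgen \<Omega> i) U V z * M z)"
      by (simp add: sum_distrib_right)
  qed
qed

lemma lex_total: "a \<noteq> b \<Longrightarrow> lexless a b \<or> lexless b a"
  unfolding lexless_def by (cases a; cases b) auto

lemma lex_asym: "lexless a b \<Longrightarrow> \<not> lexless b a"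
  unfolding lexless_def by auto

lemma lm_pair: assumes "lexless a b" shows "lmin {a, b} = a" "lmax {a, b} = b"
proof -
  have ab: "a \<noteq> b" using assms unfolding lexless_def by auto
  have na: "\<not> lexless b a" using lex_asym[OF assms] .
  show "lmin {a, b} = a" unfolding lmin_def
    apply (rule the_equality)
    using assms apply blast
    using na ab by auto
  show "lmax {a, b} = b" unfolding lmax_def
    apply (rule the_equality)
    using assms apply blast
    using na ab by auto
qed

lemma card2_lm: assumes "card \<tau> = 2"
  shows "\<tau> = {lmin \<tau>, lmax \<tau>}" "lmin \<tau> \<noteq> lmax \<tau>" "lexless (lmin \<tau>) (lmax \<tau>)"
proof -
  obtain a b where ab: "\<tau> = {a, b}" "a \<noteq> b" using assms by (auto simp: card_2_iff)
  have "(lexless a b \<and> lmin \<tau> = a \<and> lmax \<tau> = b) \<or> (lexless b a \<and> lmin \<tau> = b \<and> lmax \<tau> = a)"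
  proof (cases "lexless a b")
    case True then show ?thesis using lm_pair[OF True] ab(1) by simp
  next
    case False then have ba: "lexless b a" using lex_total[OF ab(2)] by simp
    have "\<tau> = {b, a}" using ab(1) by (simp add: insert_commute)
    then show ?thesis using lm_pair[OF ba] ba by simp
  qed
  then have "\<tau> = {lmin \<tau>, lmax \<tau>} \<and> lmin \<tau> \<noteq> lmax \<tau> \<and> lexless (lmin \<tau>) (lmax \<tau>)"
    using ab by (elim disjE conjE) (simp_all add: insert_commute)
  then show "\<tau> = {lmin \<tau>, lmax \<tau>}" "lmin \<tau> \<noteq> lmax \<tau>" "lexless (lmin \<tau>) (lmax \<tau>)"
    by blast+
qed

lemma lm_in: assumes "card \<tau> = 2" shows "lmin \<tau> \<in> \<tau>" "lmax \<tau> \<in> \<tau>"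
proof -
  have e: "{lmin \<tau>, lmax \<tau>} = \<tau>" using card2_lm(1)[OF assms] by simp
  have "lmin \<tau> \<in> {lmin \<tau>, lmax \<tau>}" "lmax \<tau> \<in> {lmin \<tau>, lmax \<tau>}" by simp_all
  with e show "lmin \<tau> \<in> \<tau>" "lmax \<tau> \<in> \<tau>" by simp_all
qed

lemma edge_vsign_out: "card \<tau> = 2 \<Longrightarrow> \<gamma> \<notin> \<tau> \<Longrightarrow> edge_vsign \<tau> \<gamma> = 0"
proof -
  assume c: "card \<tau> = 2" and g: "\<gamma> \<notin> \<tau>"
  have "\<gamma> \<noteq> lmin \<tau>" "\<gamma> \<noteq> lmax \<tau>" using lm_in[OF c] g by auto
  then show ?thesis unfolding edge_vsign_def by simp
qed

lemma edge_vsign_in: "card \<tau> = 2 \<Longrightarrow> \<gamma> \<in> \<tau> \<Longrightarrow> edge_vsign \<tau> \<gamma> * edge_vsign \<tau> \<gamma> = 1"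
  using card2_lm[of \<tau>] unfolding edge_vsign_def by auto

lemma proj_aux: fixes A B X Y t :: real
  assumes "A*Y - B*X = 0" "t*(A^2+B^2) = A*X + B*Y"
  shows "(t*A - X)*(A^2+B^2) = 0" "(t*B - Y)*(A^2+B^2) = 0"
proof -
  have "(t*A - X)*(A^2+B^2) = A*(t*(A^2+B^2)) - X*(A^2+B^2)" by (simp add: algebra_simps)
  also have "\<dots> = B*(A*Y - B*X)" unfolding assms(2) by (simp add: algebra_simps power2_eq_square)
  finally show "(t*A - X)*(A^2+B^2) = 0" using assms(1) by simp
  have "(t*B - Y)*(A^2+B^2) = B*(t*(A^2+B^2)) - Y*(A^2+B^2)" by (simp add: algebra_simps)
  also have "\<dots> = - A*(A*Y - B*X)" unfolding assms(2) by (simp add: algebra_simps power2_eq_square)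
  finally show "(t*B - Y)*(A^2+B^2) = 0" using assms(1) by simp
qed

lemma det2_zero_iff:
  assumes pq: "p \<noteq> q"
  shows "det2 (q - p) (z - p) = 0 \<longleftrightarrow> z \<in> affine hull {p, q}"
proof
  assume d: "det2 (q - p) (z - p) = 0"
  define n where "n = (fst (q - p))^2 + (snd (q - p))^2"
  have n: "n \<noteq> 0" unfolding n_def using pq
    by (cases p; cases q) (auto simp: sum_power2_eq_zero_iff)
  define t where "t = (fst (q - p) * fst (z - p) + snd (q - p) * snd (z - p)) / n"
  have "z = (1 - t) *\<^sub>R p + t *\<^sub>R q"
  proof -
    obtain p1 p2 where pz1: "p = (p1, p2)" by (cases p)
    obtain q1 q2 where pz2: "q = (q1, q2)" by (cases q)
    obtain z1 z2 where pz3: "z = (z1, z2)" by (cases z)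
    note pz = pz1 pz2 pz3
    have d': "(q1 - p1) * (z2 - p2) - (q2 - p2) * (z1 - p1) = 0" using d unfolding pz det2_def by simp
    have n': "(q1 - p1)^2 + (q2 - p2)^2 \<noteq> 0" using n unfolding n_def pz by simp
    have e1: "z1 = (1 - t) * p1 + t * q1"
    proof -
      have "t * ((q1 - p1)^2 + (q2 - p2)^2) = (q1 - p1) * (z1 - p1) + (q2 - p2) * (z2 - p2)"
        unfolding t_def n_def pz using n' by simp
      hence "(t * (q1 - p1) - (z1 - p1)) * ((q1 - p1)^2 + (q2 - p2)^2) = 0"
        using d' by (intro proj_aux(1)) auto
      hence "t * (q1 - p1) - (z1 - p1) = 0" using n' by (metis mult_eq_0_iff)
      thus ?thesis by (simp add: algebra_simps)
    qed
    have e2: "z2 = (1 - t) * p2 + t * q2"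
    proof -
      have "t * ((q1 - p1)^2 + (q2 - p2)^2) = (q1 - p1) * (z1 - p1) + (q2 - p2) * (z2 - p2)"
        unfolding t_def n_def pz using n' by simp
      hence "(t * (q2 - p2) - (z2 - p2)) * ((q1 - p1)^2 + (q2 - p2)^2) = 0"
        using d' by (intro proj_aux(2)) auto
      hence "t * (q2 - p2) - (z2 - p2) = 0" using n' by (metis mult_eq_0_iff)
      thus ?thesis by (simp add: algebra_simps)
    qed
    show ?thesis unfolding pz using e1 e2 by simp
  qed
  then have "\<exists>u v. z = u *\<^sub>R p + v *\<^sub>R q \<and> u + v = 1"
    by (intro exI[of _ "1 - t"] exI[of _ t]) simp
  then show "z \<in> affine hull {p, q}" unfolding affine_hull_2 by blast
next
  assume "z \<in> affine hull {p, q}"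
  then obtain u v where uv: "u + v = 1" "z = u *\<^sub>R p + v *\<^sub>R q" unfolding affine_hull_2 by auto
  then have "u = 1 - v" by simp
  then show "det2 (q - p) (z - p) = 0" unfolding uv(2) det2_def
    by (cases p; cases q) (simp add: algebra_simps \<open>u = 1 - v\<close>)
qed

lemma lform_affine: "affine_fun (lform \<tau>)"
  unfolding affine_fun_def lform_def det2_def
  by (intro exI[of _ "- fst (lmax \<tau> - lmin \<tau>) * snd (lmin \<tau>) + snd (lmax \<tau> - lmin \<tau>) * fst (lmin \<tau>)"]
      exI[of _ "- snd (lmax \<tau> - lmin \<tau>)"] exI[of _ "fst (lmax \<tau> - lmin \<tau>)"] allI) (simp add: algebra_simps)

lemma lform_zero_iff: "card \<tau> = 2 \<Longrightarrow> lform \<tau> z = 0 \<longleftrightarrow> z \<in> affine hull \<tau>"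
proof -
  assume c: "card \<tau> = 2"
  have "lform \<tau> z = 0 \<longleftrightarrow> z \<in> affine hull {lmin \<tau>, lmax \<tau>}"
    unfolding lform_def by (rule det2_zero_iff[OF card2_lm(2)[OF c]])
  also have "{lmin \<tau>, lmax \<tau>} = \<tau>" using card2_lm(1)[OF c] by simp
  finally show ?thesis .
qed

lemma lform_vanish: "card \<tau> = 2 \<Longrightarrow> z \<in> \<tau> \<Longrightarrow> lform \<tau> z = 0"
  by (simp add: lform_zero_iff hull_inc)

lemma lform_nonzero: "card \<tau> = 2 \<Longrightarrow> \<exists>z. lform \<tau> z \<noteq> 0"
proof -
  assume c: "card \<tau> = 2"
  define d where "d = lmax \<tau> - lmin \<tau>"
  have "d \<noteq> 0" unfolding d_def using card2_lm(2)[OF c] by simp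
  hence "(fst d)^2 + (snd d)^2 \<noteq> 0" by (cases d) (auto simp: sum_power2_eq_zero_iff zero_prod_def)
  moreover have "lform \<tau> (lmin \<tau> + (- snd d, fst d)) = (fst d)^2 + (snd d)^2"
    unfolding lform_def d_def[symmetric] det2_def by (simp add: power2_eq_square)
  ultimately show ?thesis by (intro exI[of _ "lmin \<tau> + (- snd d, fst d)"]) simp
qed

lemma finite_edges: "triangulation T \<Longrightarrow> finite (edges T)"
proof -
  assume t: "triangulation T"
  have "\<forall>\<sigma>\<in>T. card \<sigma> = 3" "finite T" using t unfolding triangulation_def by auto
  hence fU: "finite (\<Union>T)" by (intro finite_Union) (auto intro: card_ge_0_finite)
  have "edges T \<subseteq> Pow (\<Union>T)" unfolding edges_def by auto
  then show ?thesis using fU by (rule finite_subset[OF _ finite_Pow_iff[THEN iffD2]])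
qed

lemma finite_int_edges: "triangulation T \<Longrightarrow> finite (int_edges T)"
  by (rule finite_subset[OF _ finite_edges]) (auto simp: int_edges_def)

lemma edge_at_int_vert: "\<tau> \<in> edges T \<Longrightarrow> v \<in> \<tau> \<Longrightarrow> v \<in> int_verts T \<Longrightarrow> \<tau> \<in> int_edges T"
proof -
  assume a: "\<tau> \<in> edges T" "v \<in> \<tau>" "v \<in> int_verts T"
  have "v \<in> convex hull \<tau>" using a(2) by (rule hull_inc)
  moreover have "v \<notin> frontier (region T)" using a(3) unfolding int_verts_def by simp
  ultimately have "\<not> (convex hull \<tau> \<subseteq> frontier (region T))" by blast
  then show ?thesis using a(1) unfolding int_edges_def by simp
qed


lemma no_common:
  fixes \<sigma> \<tau>1 \<tau>2 \<tau>3 :: "pt set"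
  assumes s3: "card \<sigma> = 3" and sub: "\<tau>1 \<subseteq> \<sigma>" "\<tau>2 \<subseteq> \<sigma>" "\<tau>3 \<subseteq> \<sigma>"
    and c2: "card \<tau>1 = 2" "card \<tau>2 = 2" "card \<tau>3 = 2"
    and ne: "\<tau>1 \<noteq> \<tau>2" "\<tau>2 \<noteq> \<tau>3" "\<tau>1 \<noteq> \<tau>3"
    and g: "g \<in> \<tau>1" "g \<in> \<tau>2" "g \<in> \<tau>3"
  shows False
proof -
  have ex: "\<exists>x. \<tau> = {g, x} \<and> x \<noteq> g" if "card \<tau> = 2" "g \<in> \<tau>" for \<tau> :: "pt set"
  proof -
    have "\<exists>a b. \<tau> = {a, b} \<and> a \<noteq> b" using that(1) by (simp add: card_2_iff)
    then obtain a b where ab: "\<tau> = {a, b}" "a \<noteq> b" by blast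
    show ?thesis
    proof (cases "a = g")
      case True then show ?thesis using ab by (intro exI[of _ b]) simp
    next
      case False then have "b = g" using that(2) ab by auto
      then show ?thesis using ab False by (intro exI[of _ a]) (simp add: insert_commute)
    qed
  qed
  obtain x1 where x1: "\<tau>1 = {g, x1}" "x1 \<noteq> g" using ex[OF c2(1) g(1)] by blast
  obtain x2 where x2: "\<tau>2 = {g, x2}" "x2 \<noteq> g" using ex[OF c2(2) g(2)] by blast
  obtain x3 where x3: "\<tau>3 = {g, x3}" "x3 \<noteq> g" using ex[OF c2(3) g(3)] by blast
  have d: "x1 \<noteq> x2" "x2 \<noteq> x3" "x1 \<noteq> x3" using ne x1 x2 x3 by auto
  have "{x1, x2, x3} \<subseteq> \<sigma> - {g}" using sub x1 x2 x3 by auto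
  moreover have "finite \<sigma>" using s3 by (intro card_ge_0_finite) simp
  ultimately have "card {x1, x2, x3} \<le> card (\<sigma> - {g})" by (intro card_mono) auto
  moreover have "card (\<sigma> - {g}) = 2" using s3 sub g by (subst card_Diff_singleton) auto
  moreover have "card {x1, x2, x3} = 3" using d by simp
  ultimately show False by simp
qed

lemma triangle_struct:
  fixes \<sigma> \<tau>1 \<tau>2 \<tau>3 :: "pt set"
  assumes s3: "card \<sigma> = 3" and sub: "\<tau>1 \<subseteq> \<sigma>" "\<tau>2 \<subseteq> \<sigma>" "\<tau>3 \<subseteq> \<sigma>"
    and c2: "card \<tau>1 = 2" "card \<tau>2 = 2" "card \<tau>3 = 2"
    and ne: "\<tau>1 \<noteq> \<tau>2" "\<tau>2 \<noteq> \<tau>3" "\<tau>1 \<noteq> \<tau>3"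
    and v: "\<tau>1 \<inter> \<tau>2 = {\<gamma>1}" "\<tau>2 \<inter> \<tau>3 = {\<gamma>2}" "\<tau>3 \<inter> \<tau>1 = {\<gamma>3}"
  shows "\<gamma>1 \<noteq> \<gamma>2" "\<gamma>2 \<noteq> \<gamma>3" "\<gamma>1 \<noteq> \<gamma>3"
    "\<tau>1 = {\<gamma>3, \<gamma>1}" "\<tau>2 = {\<gamma>1, \<gamma>2}" "\<tau>3 = {\<gamma>2, \<gamma>3}" "\<sigma> = {\<gamma>1, \<gamma>2, \<gamma>3}"
proof -
  have m: "\<gamma>1 \<in> \<tau>1" "\<gamma>1 \<in> \<tau>2" "\<gamma>2 \<in> \<tau>2" "\<gamma>2 \<in> \<tau>3" "\<gamma>3 \<in> \<tau>3" "\<gamma>3 \<in> \<tau>1"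
    using v by blast+
  note nc = no_common[OF s3 sub c2 ne]
  show d12: "\<gamma>1 \<noteq> \<gamma>2"
  proof assume e: "\<gamma>1 = \<gamma>2" show False using nc[of \<gamma>1] m e by simp qed
  show d23: "\<gamma>2 \<noteq> \<gamma>3"
  proof assume e: "\<gamma>2 = \<gamma>3" show False using nc[of \<gamma>2] m e by simp qed
  show d13: "\<gamma>1 \<noteq> \<gamma>3"
  proof assume e: "\<gamma>1 = \<gamma>3" show False using nc[of \<gamma>1] m e by simp qed
  have fin: "finite \<tau>1" "finite \<tau>2" "finite \<tau>3" using c2 by (auto intro: card_ge_0_finite)
  have "{\<gamma>3, \<gamma>1} = \<tau>1" by (rule card_subset_eq[OF fin(1)]) (use m d13 c2 in auto)
  then show "\<tau>1 = {\<gamma>3, \<gamma>1}" by simp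
  have "{\<gamma>1, \<gamma>2} = \<tau>2" by (rule card_subset_eq[OF fin(2)]) (use m d12 c2 in auto)
  then show "\<tau>2 = {\<gamma>1, \<gamma>2}" by simp
  have "{\<gamma>2, \<gamma>3} = \<tau>3" by (rule card_subset_eq[OF fin(3)]) (use m d23 c2 in auto)
  then show "\<tau>3 = {\<gamma>2, \<gamma>3}" by simp
  have fs: "finite \<sigma>" using s3 by (intro card_ge_0_finite) simp
  have ins: "\<gamma>1 \<in> \<sigma>" "\<gamma>2 \<in> \<sigma>" "\<gamma>3 \<in> \<sigma>" using m sub by blast+
  have "{\<gamma>1, \<gamma>2, \<gamma>3} = \<sigma>" by (rule card_subset_eq[OF fs]) (simp_all add: ins d12 d23 d13 s3)
  then show "\<sigma> = {\<gamma>1, \<gamma>2, \<gamma>3}" by simp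
qed

lemma det_nonzero:
  assumes "\<not> affine_dependent {a, b, c}" "a \<noteq> b" "a \<noteq> c" "b \<noteq> c"
  shows "det2 (b - a) (c - a) \<noteq> 0"
proof
  assume "det2 (b - a) (c - a) = 0"
  then have "c \<in> affine hull {a, b}" using det2_zero_iff[OF assms(2)] by simp
  moreover have "{a, b, c} - {c} = {a, b}" using assms by auto
  ultimately have "affine_dependent {a, b, c}" unfolding affine_dependent_def
    by (intro bexI[of _ c]) simp_all
  then show False using assms(1) by simp
qed

lemma poly_fun_Pm: "poly_fun p \<Longrightarrow> \<exists>m. p \<in> Pm m"
proof -
  assume "poly_fun p"
  then obtain c N where c: "\<And>x y. p (x, y) = (\<Sum>i\<le>N. \<Sum>j\<le>N. c i j * x ^ i * y ^ j)"
    unfolding poly_fun_def by blast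
  have "(\<lambda>z. \<Sum>i\<le>N. \<Sum>j\<le>N. c i j * (fst z ^ i * snd z ^ j)) \<in> Pm (N + N)"
    by (intro Pm_sum Pm_scale Pm_monomial) auto
  then have "p \<in> Pm (N + N)"
  proof (rule Pm_ext)
    fix z show "p z = (\<Sum>i\<le>N. \<Sum>j\<le>N. c i j * (fst z ^ i * snd z ^ j))"
      using c[of "fst z" "snd z"] by (simp add: mult.assoc)
  qed
  then show ?thesis by blast
qed

lemma poly_fun_add: "poly_fun p \<Longrightarrow> poly_fun q \<Longrightarrow> poly_fun (\<lambda>z. p z + q z)"
proof -
  assume "poly_fun p" "poly_fun q"
  then obtain a b where "p \<in> Pm a" "q \<in> Pm b" using poly_fun_Pm by blast
  then have "p \<in> Pm (max a b)" "q \<in> Pm (max a b)" by (auto intro: Pm_mono)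
  then show ?thesis by (intro Pm_poly_fun Pm_add)
qed

lemma poly_fun_scale: "poly_fun p \<Longrightarrow> poly_fun (\<lambda>z. a * p z)"
  using poly_fun_Pm Pm_scale Pm_poly_fun by blast

lemma lform_Pm: "lform \<tau> \<in> Pm 1"
  by (rule affine_fun_Pm[OF lform_affine])

lemma J_edge_sub: "J_edge m rr \<tau> \<subseteq> Pm m"
  unfolding J_edge_def by auto

lemma J_edge_closed: "closedW (J_edge m rr \<tau>)"
  unfolding closedW_def
proof (intro conjI ballI allI)
  show "(\<lambda>z. 0) \<in> J_edge m rr \<tau>" unfolding J_edge_def
    by (auto intro!: exI[of _ "\<lambda>z. 0"] Pm_zero Pm_poly_fun[OF Pm_zero[of 0]])
next
  fix p q assume p: "p \<in> J_edge m rr \<tau>" and q: "q \<in> J_edge m rr \<tau>"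
  obtain g where g: "poly_fun g" "p = (\<lambda>z. g z * lform \<tau> z ^ nat (rr \<tau> + 1))" "p \<in> Pm m"
    using p unfolding J_edge_def by blast
  obtain h where h: "poly_fun h" "q = (\<lambda>z. h z * lform \<tau> z ^ nat (rr \<tau> + 1))" "q \<in> Pm m"
    using q unfolding J_edge_def by blast
  show "(\<lambda>z. p z + q z) \<in> J_edge m rr \<tau>" unfolding J_edge_def
    using g h by (auto intro!: exI[of _ "\<lambda>z. g z + h z"] Pm_add poly_fun_add simp: algebra_simps)
next
  fix p a assume p: "p \<in> J_edge m rr \<tau>"
  obtain g where g: "poly_fun g" "p = (\<lambda>z. g z * lform \<tau> z ^ nat (rr \<tau> + 1))" "p \<in> Pm m"
    using p unfolding J_edge_def by blast
  show "(\<lambda>z. a * p z) \<in> J_edge m rr \<tau>" unfolding J_edge_def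
    using g by (auto intro!: exI[of _ "\<lambda>z. a * g z"] Pm_scale poly_fun_scale simp: algebra_simps)
qed

lemma J_edge_minus1: "rr \<tau> = -1 \<Longrightarrow> J_edge m rr \<tau> = Pm m"
  unfolding J_edge_def using Pm_poly_fun by auto

lemma J_edge_intro:
  assumes G: "G \<in> Pm k" and km: "k + nat (rr \<tau> + 1) \<le> m"
  shows "(\<lambda>z. lform \<tau> z ^ nat (rr \<tau> + 1) * G z) \<in> J_edge m rr \<tau>"
proof -
  have "(\<lambda>z. lform \<tau> z ^ nat (rr \<tau> + 1)) \<in> Pm (1 * nat (rr \<tau> + 1))" by (rule Pm_pow[OF lform_Pm])
  then have "(\<lambda>z. lform \<tau> z ^ nat (rr \<tau> + 1) * G z) \<in> Pm (nat (rr \<tau> + 1) + k)"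
    using Pm_mult[OF _ G] by simp
  then have "(\<lambda>z. lform \<tau> z ^ nat (rr \<tau> + 1) * G z) \<in> Pm m" using km by (auto intro: Pm_mono)
  then show ?thesis unfolding J_edge_def using Pm_poly_fun[OF G]
    by (auto intro!: exI[of _ G] simp: mult.commute)
qed

lemma J_vert_closed: assumes "triangulation T" shows "closedW (J_vert T m rr v)"
  unfolding closedW_def
proof (intro conjI ballI allI)
  show "(\<lambda>z. 0) \<in> J_vert T m rr v" unfolding J_vert_def
    using J_edge_closed unfolding closedW_def by (auto intro!: exI[of _ "\<lambda>\<tau> z. 0"])
next
  fix p q assume p: "p \<in> J_vert T m rr v" and q: "q \<in> J_vert T m rr v"
  obtain f where f: "\<forall>\<tau>\<in>int_edges T. v \<in> \<tau> \<longrightarrow> f \<tau> \<in> J_edge m rr \<tau>" "p = (\<lambda>z. \<Sum>\<tau>\<in>{\<tau> \<in> int_edges T. v \<in> \<tau>}. f \<tau> z)"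
    using p unfolding J_vert_def by blast
  obtain g where g: "\<forall>\<tau>\<in>int_edges T. v \<in> \<tau> \<longrightarrow> g \<tau> \<in> J_edge m rr \<tau>" "q = (\<lambda>z. \<Sum>\<tau>\<in>{\<tau> \<in> int_edges T. v \<in> \<tau>}. g \<tau> z)"
    using q unfolding J_vert_def by blast
  show "(\<lambda>z. p z + q z) \<in> J_vert T m rr v" unfolding J_vert_def
  proof (intro CollectI exI[of _ "\<lambda>\<tau> z. f \<tau> z + g \<tau> z"] conjI)
    show "\<forall>\<tau>\<in>int_edges T. v \<in> \<tau> \<longrightarrow> (\<lambda>z. f \<tau> z + g \<tau> z) \<in> J_edge m rr \<tau>"
      using f g J_edge_closed unfolding closedW_def by blast
    show "(\<lambda>z. p z + q z) = (\<lambda>z. \<Sum>\<tau>\<in>{\<tau> \<in> int_edges T. v \<in> \<tau>}. f \<tau> z + g \<tau> z)"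
      unfolding f(2) g(2) by (simp add: sum.distrib)
  qed
next
  fix p a assume p: "p \<in> J_vert T m rr v"
  obtain f where f: "\<forall>\<tau>\<in>int_edges T. v \<in> \<tau> \<longrightarrow> f \<tau> \<in> J_edge m rr \<tau>" "p = (\<lambda>z. \<Sum>\<tau>\<in>{\<tau> \<in> int_edges T. v \<in> \<tau>}. f \<tau> z)"
    using p unfolding J_vert_def by blast
  show "(\<lambda>z. a * p z) \<in> J_vert T m rr v" unfolding J_vert_def
  proof (intro CollectI exI[of _ "\<lambda>\<tau> z. a * f \<tau> z"] conjI)
    show "\<forall>\<tau>\<in>int_edges T. v \<in> \<tau> \<longrightarrow> (\<lambda>z. a * f \<tau> z) \<in> J_edge m rr \<tau>"
      using f J_edge_closed unfolding closedW_def by blast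
    show "(\<lambda>z. a * p z) = (\<lambda>z. \<Sum>\<tau>\<in>{\<tau> \<in> int_edges T. v \<in> \<tau>}. a * f \<tau> z)"
      unfolding f(2) by (simp add: sum_distrib_left)
  qed
qed

lemma J_vert_edge:
  assumes tri: "triangulation T" and t: "\<tau> \<in> int_edges T" "v \<in> \<tau>" and q: "q \<in> J_edge m rr \<tau>"
  shows "q \<in> J_vert T m rr v"
  unfolding J_vert_def
proof (intro CollectI exI[of _ "\<lambda>\<tau>'. if \<tau>' = \<tau> then q else (\<lambda>z. 0)"] conjI)
  show "\<forall>\<tau>'\<in>int_edges T. v \<in> \<tau>' \<longrightarrow> (if \<tau>' = \<tau> then q else (\<lambda>z. 0)) \<in> J_edge m rr \<tau>'"
    using q J_edge_closed unfolding closedW_def by auto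
  have fin: "finite {\<tau> \<in> int_edges T. v \<in> \<tau>}" using finite_int_edges[OF tri] by simp
  have "(\<Sum>\<tau>'\<in>{\<tau> \<in> int_edges T. v \<in> \<tau>}. (if \<tau>' = \<tau> then q else (\<lambda>z. 0)) z) = q z" for z
  proof -
    have "(\<Sum>\<tau>'\<in>{\<tau> \<in> int_edges T. v \<in> \<tau>}. (if \<tau>' = \<tau> then q else (\<lambda>z. 0)) z) =
          (\<Sum>\<tau>'\<in>{\<tau> \<in> int_edges T. v \<in> \<tau>}. if \<tau>' = \<tau> then q z else 0)"
      by (rule sum.cong) auto
    also have "\<dots> = q z" using fin t by simp
    finally show ?thesis .
  qed
  then show "q = (\<lambda>z. \<Sum>\<tau>'\<in>{\<tau> \<in> int_edges T. v \<in> \<tau>}. (if \<tau>' = \<tau> then q else (\<lambda>z. 0)) z)"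
    by auto
qed

lemma J_vert_sub: assumes "triangulation T" shows "J_vert T m rr v \<subseteq> Pm m"
proof
  fix q assume "q \<in> J_vert T m rr v"
  then obtain f where f: "\<forall>\<tau>\<in>int_edges T. v \<in> \<tau> \<longrightarrow> f \<tau> \<in> J_edge m rr \<tau>" "q = (\<lambda>z. \<Sum>\<tau>\<in>{\<tau> \<in> int_edges T. v \<in> \<tau>}. f \<tau> z)"
    unfolding J_vert_def by blast
  have fin: "finite {\<tau> \<in> int_edges T. v \<in> \<tau>}" using finite_int_edges[OF assms] by simp
  show "q \<in> Pm m" unfolding f(2) by (rule Pm_sum[OF fin]) (use f(1) J_edge_sub in blast)
qed

lemma J_vert_mono:
  assumes "\<And>\<tau>. \<tau> \<in> int_edges T \<Longrightarrow> v \<in> \<tau> \<Longrightarrow> J_edge m rr \<tau> \<subseteq> J_edge m rr' \<tau>"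
  shows "J_vert T m rr v \<subseteq> J_vert T m rr' v"
  unfolding J_vert_def using assms by blast

lemma J_edge_cong: "rr \<tau> = rr' \<tau> \<Longrightarrow> J_edge m rr \<tau> = J_edge m rr' \<tau>"
  unfolding J_edge_def by simp

lemma J_vert_cong:
  assumes "\<And>\<tau>. \<tau> \<in> int_edges T \<Longrightarrow> v \<in> \<tau> \<Longrightarrow> rr \<tau> = rr' \<tau>"
  shows "J_vert T m rr v = J_vert T m rr' v"
  using J_vert_mono[of T v m rr rr'] J_vert_mono[of T v m rr' rr] assms J_edge_cong
  by (metis subset_antisym subset_refl)

lemma arith_Om:
  fixes r :: int and n \<Omega> :: nat
  assumes r0: "r \<ge> 0" and n2: "n \<ge> 2"
    and Om: "\<Omega> = nat (r + \<lceil>real_of_int (r + 1) / real_of_int (min (r + 2) (int n) - 1)\<rceil>)"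
  shows "1 \<le> nat (r + 1)" "nat (r + 1) \<le> \<Omega>" "\<Omega> + 1 \<le> (\<Omega> + 1 - nat (r + 1)) * n"
proof -
  define t where "t = min (r + 2) (int n)"
  have t2: "t \<ge> 2" unfolding t_def using r0 n2 by simp
  define q where "q = \<lceil>real_of_int (r + 1) / real_of_int (t - 1)\<rceil>"
  have pos: "real_of_int (r + 1) / real_of_int (t - 1) > 0" using r0 t2 by simp
  have qx: "real_of_int q \<ge> real_of_int (r + 1) / real_of_int (t - 1)" unfolding q_def by (rule le_of_int_ceiling)
  have q1: "q \<ge> 1" using qx pos by (simp add: q_def)
  have "real_of_int q * real_of_int (t - 1) \<ge> real_of_int (r + 1)"
    using qx t2 by (simp add: divide_le_eq)
  hence "real_of_int (r + 1) \<le> real_of_int (q * (t - 1))" by simp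
  hence qt: "q * (t - 1) \<ge> r + 1" by (simp only: of_int_le_iff)
  have Omq: "int \<Omega> = r + q" unfolding Om t_def[symmetric] q_def[symmetric] using r0 q1 by simp
  have tn: "t \<le> int n" unfolding t_def by simp
  have "q * t \<le> q * int n" using tn q1 by (simp add: mult_left_mono)
  show "1 \<le> nat (r + 1)" using r0 by simp
  show "nat (r + 1) \<le> \<Omega>" using Omq q1 by simp
  have "int (\<Omega> + 1 - nat (r + 1)) = q" using Omq r0 q1 by simp
  hence "int ((\<Omega> + 1 - nat (r + 1)) * n) = q * int n" by simp
  moreover have "int (\<Omega> + 1) \<le> q * int n" using Omq qt \<open>q * t \<le> q * int n\<close> by (simp add: algebra_simps)
  ultimately show "\<Omega> + 1 \<le> (\<Omega> + 1 - nat (r + 1)) * n" by linarith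
qed

lemma card_image_iff_eq:
  assumes "\<And>x y. x \<in> E \<Longrightarrow> y \<in> E \<Longrightarrow> f x = f y \<longleftrightarrow> g x = g y"
  shows "card (f ` E) = card (g ` E)"
proof -
  define h where "h = (\<lambda>u. g (SOME x. x \<in> E \<and> f x = u))"
  have hf: "h (f x) = g x" if "x \<in> E" for x
  proof -
    have "(SOME y. y \<in> E \<and> f y = f x) \<in> E \<and> f (SOME y. y \<in> E \<and> f y = f x) = f x"
      by (rule someI[of _ x]) (use that in simp)
    then show ?thesis unfolding h_def using assms that by blast
  qed
  have inj: "inj_on h (f ` E)"
  proof (rule inj_onI)
    fix u u' assume "u \<in> f ` E" "u' \<in> f ` E" "h u = h u'"
    then obtain x x' where "x \<in> E" "x' \<in> E" "u = f x" "u' = f x'" "g x = g x'" using hf by auto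
    then show "u = u'" using assms by blast
  qed
  have "h ` (f ` E) = g ` E" using hf by (auto simp: image_iff)
  then show ?thesis using card_image[OF inj] by simp
qed

lemma aff_comb:
  assumes "affine_fun f" "x + y + w = 1"
  shows "f (x *\<^sub>R p + y *\<^sub>R q + w *\<^sub>R s) = x * f p + y * f q + w * f s"
proof -
  obtain a b c where f: "\<And>z. f z = a + b * fst z + c * snd z" using assms(1) unfolding affine_fun_def by blast
  have "a = (x + y + w) * a" using assms(2) by simp
  then show ?thesis unfolding f by (simp add: algebra_simps)
qed


lemma aux_lin: "(k::real) \<noteq> 0 \<Longrightarrow> k * (u - (- l / k) * w) = k * u + l * w"
  by (simp add: algebra_simps)

definition slope :: "pt \<Rightarrow> pt \<Rightarrow> pt set \<Rightarrow> real option" where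
  "slope b c \<tau> = (if lform \<tau> b \<noteq> 0 then Some (- lform \<tau> c / lform \<tau> b) else None)"

lemma uv_vals:
  assumes D: "det2 (b - v) (c - v) \<noteq> 0"
  shows "bc b c v v = 0" "bc b c v b = 1" "bc b c v c = 0"
        "bc c v b v = 0" "bc c v b b = 0" "bc c v b c = 1"
proof -
  have D1: "det2 (c - b) (v - b) \<noteq> 0" using D det2_cyc(1)[of c b v] by simp
  have D2: "det2 (v - c) (b - c) \<noteq> 0" using D det2_cyc(2)[of v c b] by simp
  show "bc b c v v = 0" "bc b c v b = 1" "bc b c v c = 0" using bc_vert[OF D1] by simp_all
  show "bc c v b v = 0" "bc c v b b = 0" "bc c v b c = 1" using bc_vert[OF D2] by simp_all
qed

lemma lform_expand:
  assumes D: "det2 (b - v) (c - v) \<noteq> 0" and c2: "card \<tau> = 2" and v: "v \<in> \<tau>"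
  shows "lform \<tau> z = lform \<tau> b * bc b c v z + lform \<tau> c * bc c v b z"
  using affine_bc_expand[OF D lform_affine, of \<tau> z] lform_vanish[OF c2 v] by simp

lemma lform_lin:
  assumes D: "det2 (b - v) (c - v) \<noteq> 0" and c2: "card \<tau> = 2" and v: "v \<in> \<tau>"
  shows "\<exists>\<kappa>. \<kappa> \<noteq> 0 \<and> (\<forall>z. lform \<tau> z = \<kappa> * lin_of (bc b c v) (bc c v b) (slope b c \<tau>) z)"
proof (cases "lform \<tau> b = 0")
  case False
  have sl: "slope b c \<tau> = Some (- lform \<tau> c / lform \<tau> b)" using False by (simp add: slope_def)
  have "lform \<tau> z = lform \<tau> b * lin_of (bc b c v) (bc c v b) (slope b c \<tau>) z" for z
  proof -
    have e: "lform \<tau> z = lform \<tau> b * bc b c v z + lform \<tau> c * bc c v b z" by (rule lform_expand[OF D c2 v])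
    have "lform \<tau> b * (bc b c v z - (- lform \<tau> c / lform \<tau> b) * bc c v b z) = lform \<tau> b * bc b c v z + lform \<tau> c * bc c v b z"
      using False by (rule aux_lin)
    then show ?thesis unfolding sl lin_of_def using e by simp
  qed
  then show ?thesis using False by blast
next
  case True
  have sl: "slope b c \<tau> = None" using True by (simp add: slope_def)
  have e: "lform \<tau> z = lform \<tau> c * bc c v b z" for z using lform_expand[OF D c2 v, of z] True by simp
  have nz: "lform \<tau> c \<noteq> 0"
  proof
    assume "lform \<tau> c = 0"
    then have "lform \<tau> z = 0" for z using e[of z] by simp
    then show False using lform_nonzero[OF c2] by simp
  qed
  have "lform \<tau> z = lform \<tau> c * lin_of (bc b c v) (bc c v b) (slope b c \<tau>) z" for z
    unfolding sl lin_of_def using e[of z] by simp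
  then show ?thesis using nz by blast
qed

lemma lin_determines:
  assumes D: "det2 (b - v) (c - v) \<noteq> 0"
    and eq: "\<And>z. lin_of (bc b c v) (bc c v b) w z = 0 \<longleftrightarrow> lin_of (bc b c v) (bc c v b) w' z = 0"
  shows "w = w'"
proof -
  let ?U = "bc b c v" and ?V = "bc c v b"
  note vals = uv_vals[OF D]
  have pt: "?U ((- \<alpha>) *\<^sub>R v + \<alpha> *\<^sub>R b + 1 *\<^sub>R c) = \<alpha> \<and> ?V ((- \<alpha>) *\<^sub>R v + \<alpha> *\<^sub>R b + 1 *\<^sub>R c) = 1" for \<alpha>
    using aff_comb[OF bc_affine, of "- \<alpha>" \<alpha> 1] vals by simp
  show ?thesis
  proof (cases w)
    case None
    show ?thesis
    proof (cases w')
      case None' : None then show ?thesis using None by simp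
    next
      case (Some \<beta>)
      have "lin_of ?U ?V w b = 0" using None vals unfolding lin_of_def by simp
      then have "lin_of ?U ?V w' b = 0" using eq by blast
      then show ?thesis using Some vals unfolding lin_of_def by simp
    qed
  next
    case (Some \<alpha>)
    show ?thesis
    proof (cases w')
      case None
      have "lin_of ?U ?V w' b = 0" using None vals unfolding lin_of_def by simp
      then have "lin_of ?U ?V w b = 0" using eq by blast
      then show ?thesis using Some vals unfolding lin_of_def by simp
    next
      case Some' : (Some \<beta>)
      define z where "z = (- \<alpha>) *\<^sub>R v + \<alpha> *\<^sub>R b + 1 *\<^sub>R c"
      have Uz: "?U z = \<alpha>" and Vz: "?V z = 1" using pt[of \<alpha>] unfolding z_def by simp_all
      have "lin_of ?U ?V w z = 0" using Some Uz Vz unfolding lin_of_def by simp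
      then have "lin_of ?U ?V w' z = 0" using eq by blast
      then have "\<alpha> = \<beta>" using Some' Uz Vz unfolding lin_of_def by simp
      then show ?thesis using Some Some' by simp
    qed
  qed
qed

lemma slope_eq_iff:
  assumes D: "det2 (b - v) (c - v) \<noteq> 0" and c2: "card \<tau> = 2" "card \<tau>' = 2" and v: "v \<in> \<tau>" "v \<in> \<tau>'"
  shows "slope b c \<tau> = slope b c \<tau>' \<longleftrightarrow> affine hull \<tau> = affine hull \<tau>'"
proof -
  obtain \<kappa> where k: "\<kappa> \<noteq> 0" "\<And>z. lform \<tau> z = \<kappa> * lin_of (bc b c v) (bc c v b) (slope b c \<tau>) z"
    using lform_lin[OF D c2(1) v(1)] by blast
  obtain \<kappa>' where k': "\<kappa>' \<noteq> 0" "\<And>z. lform \<tau>' z = \<kappa>' * lin_of (bc b c v) (bc c v b) (slope b c \<tau>') z"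
    using lform_lin[OF D c2(2) v(2)] by blast
  have z1: "z \<in> affine hull \<tau> \<longleftrightarrow> lin_of (bc b c v) (bc c v b) (slope b c \<tau>) z = 0" for z
    using lform_zero_iff[OF c2(1), of z] k by simp
  have z2: "z \<in> affine hull \<tau>' \<longleftrightarrow> lin_of (bc b c v) (bc c v b) (slope b c \<tau>') z = 0" for z
    using lform_zero_iff[OF c2(2), of z] k' by simp
  show ?thesis
  proof
    assume "slope b c \<tau> = slope b c \<tau>'"
    then show "affine hull \<tau> = affine hull \<tau>'" using z1 z2 by auto
  next
    assume h: "affine hull \<tau> = affine hull \<tau>'"
    show "slope b c \<tau> = slope b c \<tau>'"
      by (rule lin_determines[OF D]) (use z1 z2 h in auto)
  qed
qed


lemma vertex_lemma:
  fixes T :: "pt set set" and m :: nat and rr :: "pt set \<Rightarrow> int" and r :: int and v b c :: pt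
  assumes tri: "triangulation T"
    and D: "det2 (b - v) (c - v) \<noteq> 0"
    and eb: "{v, b} \<in> edges T" and ec: "{v, c} \<in> edges T"
    and vint: "v \<in> int_verts T"
    and rv: "\<And>\<tau>. \<tau> \<in> int_edges T \<Longrightarrow> v \<in> \<tau> \<Longrightarrow> rr \<tau> = r"
    and r0: "r \<ge> 0"
    and Om: "\<Omega> = nat (r + \<lceil>real_of_int (r + 1) / real_of_int (min (r + 2) (int (nslopes T v)) - 1)\<rceil>)"
    and Omm: "\<Omega> \<le> m" and a': "a' \<le> \<Omega>" and M: "M \<in> Pm (m - \<Omega>)"
  shows "(\<lambda>z. bc b c v z ^ a' * bc c v b z ^ (\<Omega> - a') * M z) \<in> J_vert T m rr v"
proof -
  define E where "E = {\<tau> \<in> edges T. v \<in> \<tau>}"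
  define P where "P = slope b c ` E"
  have finE: "finite E" unfolding E_def using finite_edges[OF tri] by simp
  have finP: "finite P" unfolding P_def using finE by simp
  have c2E: "card \<tau> = 2" if "\<tau> \<in> E" for \<tau> using that unfolding E_def edges_def by simp
  have vE: "v \<in> \<tau>" if "\<tau> \<in> E" for \<tau> using that unfolding E_def by simp
  have cardP: "card P = nslopes T v"
    unfolding P_def nslopes_def E_def[symmetric]
    by (rule card_image_iff_eq) (use slope_eq_iff[OF D] c2E vE in blast)
  have vb: "v \<noteq> b" and vc: "v \<noteq> c" using D by (auto simp: det2_def)
  have ebE: "{v, b} \<in> E" and ecE: "{v, c} \<in> E" using eb ec unfolding E_def by auto
  have s1: "slope b c {v, b} = None"
    unfolding slope_def using lform_vanish[OF c2E[OF ebE], of b] by simp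
  have s2: "slope b c {v, c} \<noteq> None"
  proof
    assume "slope b c {v, c} = None"
    then have lb: "lform {v, c} b = 0" unfolding slope_def by (simp split: if_splits)
    have lc: "lform {v, c} c = 0" using lform_vanish[OF c2E[OF ecE], of c] by simp
    have "lform {v, c} z = 0" for z using lform_expand[OF D c2E[OF ecE] vE[OF ecE], of z] lb lc by simp
    then show False using lform_nonzero[OF c2E[OF ecE]] by simp
  qed
  have "None \<in> P" unfolding P_def using s1 ebE by (metis image_eqI)
  moreover have "slope b c {v, c} \<in> P" unfolding P_def using ecE by simp
  ultimately have "{None, slope b c {v, c}} \<subseteq> P" by simp
  then have "card {None, slope b c {v, c}} \<le> card P" using finP by (rule card_mono[rotated])
  then have n2: "nslopes T v \<ge> 2" using s2 cardP by (simp add: eq_commute[of None])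
  note ar = arith_Om[OF r0 n2 Om]
  define R where "R = nat (r + 1)"
  have RO: "R \<le> \<Omega>" and R1: "1 \<le> R" using ar unfolding R_def by auto
  have cnt: "\<Omega> + 1 \<le> (\<Omega> + 1 - R) * card P" using ar(3) cardP unfolding R_def by simp
  show ?thesis
  proof (rule local_alg[OF finP R1 RO Omm cnt a' J_vert_closed[OF tri] affine_fun_Pm[OF bc_affine] affine_fun_Pm[OF bc_affine] M])
    fix w G assume w: "w \<in> P" and G: "G \<in> Pm (m - R)"
    obtain \<tau> where t: "\<tau> \<in> E" "w = slope b c \<tau>" using w unfolding P_def by blast
    obtain \<kappa> where k: "\<kappa> \<noteq> 0" "\<And>z. lform \<tau> z = \<kappa> * lin_of (bc b c v) (bc c v b) (slope b c \<tau>) z"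
      using lform_lin[OF D c2E[OF t(1)] vE[OF t(1)]] by blast
    have tint: "\<tau> \<in> int_edges T" using edge_at_int_vert[of \<tau> T v] t(1) vint unfolding E_def by simp
    have rt: "nat (rr \<tau> + 1) = R" using rv[OF tint vE[OF t(1)]] unfolding R_def by simp
    define G' where "G' = (\<lambda>z. (1 / \<kappa> ^ R) * G z)"
    have G': "G' \<in> Pm (m - R)" unfolding G'_def by (rule Pm_scale[OF G])
    have "(\<lambda>z. lform \<tau> z ^ nat (rr \<tau> + 1) * G' z) \<in> J_edge m rr \<tau>"
      by (rule J_edge_intro[OF G']) (use rt RO Omm in simp)
    then have "(\<lambda>z. lform \<tau> z ^ nat (rr \<tau> + 1) * G' z) \<in> J_vert T m rr v"
      by (rule J_vert_edge[OF tri tint vE[OF t(1)]])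
    then show "(\<lambda>z. lin_of (bc b c v) (bc c v b) w z ^ R * G z) \<in> J_vert T m rr v"
    proof (rule closedW_ext)
      fix z
      show "lin_of (bc b c v) (bc c v b) w z ^ R * G z = lform \<tau> z ^ nat (rr \<tau> + 1) * G' z"
        unfolding rt G'_def k(2) t(2) using k(1) by (simp add: power_mult_distrib field_simps)
    qed
  qed
qed


lemma nslopes_ge2:
  assumes tri: "triangulation T" and D: "det2 (b - v) (c - v) \<noteq> 0"
    and eb: "{v, b} \<in> edges T" and ec: "{v, c} \<in> edges T"
  shows "nslopes T v \<ge> 2"
proof -
  define E where "E = {\<tau> \<in> edges T. v \<in> \<tau>}"
  define P where "P = slope b c ` E"
  have finE: "finite E" unfolding E_def using finite_edges[OF tri] by simp
  have finP: "finite P" unfolding P_def using finE by simp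
  have c2E: "card \<tau> = 2" if "\<tau> \<in> E" for \<tau> using that unfolding E_def edges_def by simp
  have vE: "v \<in> \<tau>" if "\<tau> \<in> E" for \<tau> using that unfolding E_def by simp
  have cardP: "card P = nslopes T v"
    unfolding P_def nslopes_def E_def[symmetric]
    by (rule card_image_iff_eq) (use slope_eq_iff[OF D] c2E vE in blast)
  have ebE: "{v, b} \<in> E" and ecE: "{v, c} \<in> E" using eb ec unfolding E_def by auto
  have s1: "slope b c {v, b} = None"
    unfolding slope_def using lform_vanish[OF c2E[OF ebE], of b] by simp
  have s2: "slope b c {v, c} \<noteq> None"
  proof
    assume "slope b c {v, c} = None"
    then have lb: "lform {v, c} b = 0" unfolding slope_def by (simp split: if_splits)
    have lc: "lform {v, c} c = 0" using lform_vanish[OF c2E[OF ecE], of c] by simp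
    have "lform {v, c} z = 0" for z using lform_expand[OF D c2E[OF ecE] vE[OF ecE], of z] lb lc by simp
    then show False using lform_nonzero[OF c2E[OF ecE]] by simp
  qed
  have "None \<in> P" unfolding P_def using s1 ebE by (metis image_eqI)
  moreover have "slope b c {v, c} \<in> P" unfolding P_def using ecE by simp
  ultimately have "{None, slope b c {v, c}} \<subseteq> P" by simp
  then have "card {None, slope b c {v, c}} \<le> card P" using finP by (rule card_mono[rotated])
  then show "nslopes T v \<ge> 2" using s2 cardP by (simp add: eq_commute[of None])
qed

lemma vert_mono:
  fixes T :: "pt set set" and m :: nat and rr :: "pt set \<Rightarrow> int" and r :: int and v b c :: pt
  assumes tri: "triangulation T"
    and D: "det2 (b - v) (c - v) \<noteq> 0"
    and eb: "{v, b} \<in> edges T" and ec: "{v, c} \<in> edges T"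
    and vint: "v \<in> int_verts T"
    and rv: "\<And>\<tau>. \<tau> \<in> int_edges T \<Longrightarrow> v \<in> \<tau> \<Longrightarrow> rr \<tau> = r"
    and r0: "r \<ge> 0"
    and Om: "\<Omega> = nat (r + \<lceil>real_of_int (r + 1) / real_of_int (min (r + 2) (int (nslopes T v)) - 1)\<rceil>)"
    and deg: "a + bb + e = m" and big: "\<Omega> \<le> a + bb"
  shows "(\<lambda>z. bc b c v z ^ a * bc c v b z ^ bb * bc v b c z ^ e) \<in> J_vert T m rr v"
proof -
  define a' where "a' = min a \<Omega>"
  have a'1: "a' \<le> \<Omega>" "a' \<le> a" "\<Omega> - a' \<le> bb" using big unfolding a'_def by auto
  define M where "M = (\<lambda>z. bc b c v z ^ (a - a') * bc c v b z ^ (bb - (\<Omega> - a')) * bc v b c z ^ e)"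
  have U1: "bc b c v \<in> Pm 1" and V1: "bc c v b \<in> Pm 1" and W1: "bc v b c \<in> Pm 1"
    by (rule affine_fun_Pm[OF bc_affine])+
  have dM: "(a - a') + (bb - (\<Omega> - a')) + e = m - \<Omega>" using a'1 deg big by auto
  have "M \<in> Pm ((a - a') + (bb - (\<Omega> - a')) + e)" unfolding M_def
    using Pm_pow[OF U1] Pm_pow[OF V1] Pm_pow[OF W1] by (intro Pm_mult) auto
  then have M: "M \<in> Pm (m - \<Omega>)" using dM by simp
  have Omm: "\<Omega> \<le> m" using big deg by simp
  have "(\<lambda>z. bc b c v z ^ a' * bc c v b z ^ (\<Omega> - a') * M z) \<in> J_vert T m rr v"
    by (rule vertex_lemma[OF tri D eb ec vint rv r0 Om Omm a'1(1) M])
  then show ?thesis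
  proof (rule closedW_ext)
    fix z
    have "bc b c v z ^ a = bc b c v z ^ a' * bc b c v z ^ (a - a')" using a'1 by (simp flip: power_add)
    moreover have "bc c v b z ^ bb = bc c v b z ^ (\<Omega> - a') * bc c v b z ^ (bb - (\<Omega> - a'))"
      using a'1 by (simp flip: power_add)
    ultimately show "bc b c v z ^ a * bc c v b z ^ bb * bc v b c z ^ e = bc b c v z ^ a' * bc c v b z ^ (\<Omega> - a') * M z"
      unfolding M_def by (simp add: mult_ac)
  qed
qed


definition Omg :: "pt set set \<Rightarrow> int \<Rightarrow> pt \<Rightarrow> nat" where
  "Omg T r v = nat (r + \<lceil>real_of_int (r + 1) / real_of_int (min (r + 2) (int (nslopes T v)) - 1)\<rceil>)"

lemma decomposition:
  fixes T :: "pt set set" and m :: nat and rr :: "pt set \<Rightarrow> int" and r :: int and g1 g2 g3 :: pt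
  assumes tri: "triangulation T"
    and D: "det2 (g2 - g1) (g3 - g1) \<noteq> 0"
    and e12: "{g1, g2} \<in> edges T" and e21: "{g2, g1} \<in> edges T"
    and e23: "{g2, g3} \<in> edges T" and e32: "{g3, g2} \<in> edges T"
    and e31: "{g3, g1} \<in> edges T" and e13: "{g1, g3} \<in> edges T"
    and int1: "g1 \<in> int_verts T" and int2: "g2 \<in> int_verts T" and int3: "g3 \<in> int_verts T"
    and rv1: "\<And>\<tau>. \<tau> \<in> int_edges T \<Longrightarrow> g1 \<in> \<tau> \<Longrightarrow> rr \<tau> = r"
    and rv2: "\<And>\<tau>. \<tau> \<in> int_edges T \<Longrightarrow> g2 \<in> \<tau> \<Longrightarrow> rr \<tau> = r"
    and rv3: "\<And>\<tau>. \<tau> \<in> int_edges T \<Longrightarrow> g3 \<in> \<tau> \<Longrightarrow> rr \<tau> = r"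
    and r0: "r \<ge> 0"
    and bound: "Omg T r g1 + Omg T r g2 + Omg T r g3 < 2 * m + 3"
    and p: "p \<in> Pm m"
  shows "\<exists>j1 j2 j3. j1 \<in> J_vert T m rr g1 \<and> j2 \<in> J_vert T m rr g2 \<and> j3 \<in> J_vert T m rr g3 \<and>
           (\<forall>z. p z = j1 z + j2 z + j3 z)"
proof -
  define W where "W = {q. \<exists>j1 j2 j3. j1 \<in> J_vert T m rr g1 \<and> j2 \<in> J_vert T m rr g2 \<and> j3 \<in> J_vert T m rr g3 \<and>
           (\<forall>z. q z = j1 z + j2 z + j3 z)}"
  note C1 = J_vert_closed[OF tri, of m rr g1] and C2 = J_vert_closed[OF tri, of m rr g2]
    and C3 = J_vert_closed[OF tri, of m rr g3]
  have W: "closedW W" unfolding closedW_def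
  proof (intro conjI ballI allI)
    show "(\<lambda>z. 0) \<in> W" unfolding W_def using C1 C2 C3 unfolding closedW_def
      by (intro CollectI exI[of _ "\<lambda>z. 0"] conjI) auto
  next
    fix p q assume "p \<in> W" "q \<in> W"
    then obtain j1 j2 j3 k1 k2 k3 where j: "j1 \<in> J_vert T m rr g1" "j2 \<in> J_vert T m rr g2" "j3 \<in> J_vert T m rr g3"
      "\<forall>z. p z = j1 z + j2 z + j3 z" and k: "k1 \<in> J_vert T m rr g1" "k2 \<in> J_vert T m rr g2" "k3 \<in> J_vert T m rr g3"
      "\<forall>z. q z = k1 z + k2 z + k3 z" unfolding W_def by blast
    show "(\<lambda>z. p z + q z) \<in> W" unfolding W_def
      apply (rule CollectI, rule exI[of _ "\<lambda>z. j1 z + k1 z"], rule exI[of _ "\<lambda>z. j2 z + k2 z"], rule exI[of _ "\<lambda>z. j3 z + k3 z"], intro conjI)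
      using j k C1 C2 C3 unfolding closedW_def by (auto simp: algebra_simps)
  next
    fix p a assume "p \<in> W"
    then obtain j1 j2 j3 where j: "j1 \<in> J_vert T m rr g1" "j2 \<in> J_vert T m rr g2" "j3 \<in> J_vert T m rr g3"
      "\<forall>z. p z = j1 z + j2 z + j3 z" unfolding W_def by blast
    show "(\<lambda>z. a * p z) \<in> W" unfolding W_def
      apply (rule CollectI, rule exI[of _ "\<lambda>z. a * j1 z"], rule exI[of _ "\<lambda>z. a * j2 z"], rule exI[of _ "\<lambda>z. a * j3 z"], intro conjI)
      using j C1 C2 C3 unfolding closedW_def by (auto simp: algebra_simps)
  qed
  have in1: "q \<in> W" if "q \<in> J_vert T m rr g1" for q unfolding W_def
    apply (rule CollectI, rule exI[of _ q], rule exI[of _ "\<lambda>z. 0"], rule exI[of _ "\<lambda>z. 0"], intro conjI)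
    using that C2 C3 unfolding closedW_def by auto
  have in2: "q \<in> W" if "q \<in> J_vert T m rr g2" for q unfolding W_def
    apply (rule CollectI, rule exI[of _ "\<lambda>z. 0"], rule exI[of _ q], rule exI[of _ "\<lambda>z. 0"], intro conjI)
    using that C1 C3 unfolding closedW_def by auto
  have in3: "q \<in> W" if "q \<in> J_vert T m rr g3" for q unfolding W_def
    apply (rule CollectI, rule exI[of _ "\<lambda>z. 0"], rule exI[of _ "\<lambda>z. 0"], rule exI[of _ q], intro conjI)
    using that C1 C2 unfolding closedW_def by auto
  have D2: "det2 (g3 - g2) (g1 - g2) \<noteq> 0" using D det2_cyc(1)[of g3 g2 g1] by simp
  have D3: "det2 (g1 - g3) (g2 - g3) \<noteq> 0" using D det2_cyc(2)[of g1 g3 g2] by simp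
  have mono: "(\<lambda>z. bc g1 g2 g3 z ^ i * bc g2 g3 g1 z ^ j * bc g3 g1 g2 z ^ k) \<in> W" if ijk: "i + j + k = m" for i j k
  proof -
    consider "Omg T r g1 \<le> j + k" | "Omg T r g2 \<le> k + i" | "Omg T r g3 \<le> i + j"
      using bound ijk by linarith
    then show ?thesis
    proof cases
      case 1
      have "(\<lambda>z. bc g2 g3 g1 z ^ j * bc g3 g1 g2 z ^ k * bc g1 g2 g3 z ^ i) \<in> J_vert T m rr g1"
        by (rule vert_mono[OF tri D e12 e13 int1 rv1 r0 Omg_def[of T r g1]]) (use ijk 1 in auto)
      then have "(\<lambda>z. bc g2 g3 g1 z ^ j * bc g3 g1 g2 z ^ k * bc g1 g2 g3 z ^ i) \<in> W" by (rule in1)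
      then show ?thesis by (rule closedW_ext) (simp add: mult_ac)
    next
      case 2
      have "(\<lambda>z. bc g3 g1 g2 z ^ k * bc g1 g2 g3 z ^ i * bc g2 g3 g1 z ^ j) \<in> J_vert T m rr g2"
        by (rule vert_mono[OF tri D2 e23 e21 int2 rv2 r0 Omg_def[of T r g2]]) (use ijk 2 in auto)
      then have "(\<lambda>z. bc g3 g1 g2 z ^ k * bc g1 g2 g3 z ^ i * bc g2 g3 g1 z ^ j) \<in> W" by (rule in2)
      then show ?thesis by (rule closedW_ext) (simp add: mult_ac)
    next
      case 3
      have "(\<lambda>z. bc g1 g2 g3 z ^ i * bc g2 g3 g1 z ^ j * bc g3 g1 g2 z ^ k) \<in> J_vert T m rr g3"
        by (rule vert_mono[OF tri D3 e31 e32 int3 rv3 r0 Omg_def[of T r g3]]) (use ijk 3 in auto)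
      then show ?thesis by (rule in3)
    qed
  qed
  have "p \<in> W" by (rule bernstein[OF D W mono p])
  then show ?thesis unfolding W_def by blast
qed

theorem mainTheorem4:
  fixes T :: "pt set set" and m :: nat and r :: int and rr :: "pt set \<Rightarrow> int"
    and \<sigma> \<tau>1 \<tau>2 \<tau>3 :: "pt set" and \<gamma>1 \<gamma>2 \<gamma>3 :: pt
  assumes tri: "triangulation T"
    and r_ge: "r \<ge> -1"
    and rr_vals: "\<forall>\<tau>\<in>int_edges T. rr \<tau> = r \<or> rr \<tau> = -1"
    and acyc: "lower_acyclic T m rr"
    and face: "\<sigma> \<in> T"
    and edges_of_face: "\<tau>1 \<subseteq> \<sigma>" "\<tau>2 \<subseteq> \<sigma>" "\<tau>3 \<subseteq> \<sigma>"
      "card \<tau>1 = 2" "card \<tau>2 = 2" "card \<tau>3 = 2"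
      "\<tau>1 \<noteq> \<tau>2" "\<tau>2 \<noteq> \<tau>3" "\<tau>1 \<noteq> \<tau>3"
    and verts: "\<tau>1 \<inter> \<tau>2 = {\<gamma>1}" "\<tau>2 \<inter> \<tau>3 = {\<gamma>2}" "\<tau>3 \<inter> \<tau>1 = {\<gamma>3}"
    and interior: "\<gamma>1 \<in> int_verts T" "\<gamma>2 \<in> int_verts T" "\<gamma>3 \<in> int_verts T"
    and r_on_edges: "rr \<tau>1 = r" "rr \<tau>2 = r" "rr \<tau>3 = r"
    and no_minus_one: "\<forall>\<gamma>\<in>{\<gamma>1, \<gamma>2, \<gamma>3}. \<forall>\<tau>\<in>int_edges T. \<gamma> \<in> \<tau> \<longrightarrow> rr \<tau> \<noteq> -1"
    and bound: "real m > (of_int (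
        (r + \<lceil>real_of_int (r + 1) / real_of_int (min (r + 2) (int (nslopes T \<gamma>1)) - 1)\<rceil>)
      + (r + \<lceil>real_of_int (r + 1) / real_of_int (min (r + 2) (int (nslopes T \<gamma>2)) - 1)\<rceil>)
      + (r + \<lceil>real_of_int (r + 1) / real_of_int (min (r + 2) (int (nslopes T \<gamma>3)) - 1)\<rceil>)
      - 3)) / 2"
  shows "lower_acyclic T m (\<lambda>\<tau>. if \<tau> \<in> {\<tau>1, \<tau>2, \<tau>3} then -1 else rr \<tau>)"
proof -
  have s3: "card \<sigma> = 3" and nad: "\<not> affine_dependent \<sigma>" and finT: "finite T"
    using tri face unfolding triangulation_def by auto
  note ts = triangle_struct[OF s3 edges_of_face verts]
  have d12: "\<gamma>1 \<noteq> \<gamma>2" and d23: "\<gamma>2 \<noteq> \<gamma>3" and d13: "\<gamma>1 \<noteq> \<gamma>3" using ts by auto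
  have t1: "\<tau>1 = {\<gamma>3, \<gamma>1}" and t2: "\<tau>2 = {\<gamma>1, \<gamma>2}" and t3: "\<tau>3 = {\<gamma>2, \<gamma>3}"
    and sg: "\<sigma> = {\<gamma>1, \<gamma>2, \<gamma>3}" using ts by auto
  have D: "det2 (\<gamma>2 - \<gamma>1) (\<gamma>3 - \<gamma>1) \<noteq> 0"
    by (rule det_nonzero) (use nad sg d12 d23 d13 in auto)
  have te: "\<tau>1 \<in> edges T" "\<tau>2 \<in> edges T" "\<tau>3 \<in> edges T"
    unfolding edges_def using edges_of_face face by auto
  have e12: "{\<gamma>1, \<gamma>2} \<in> edges T" and e21: "{\<gamma>2, \<gamma>1} \<in> edges T"
    using te(2) unfolding t2 by (simp_all add: insert_commute)
  have e23: "{\<gamma>2, \<gamma>3} \<in> edges T" and e32: "{\<gamma>3, \<gamma>2} \<in> edges T"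
    using te(3) unfolding t3 by (simp_all add: insert_commute)
  have e31: "{\<gamma>3, \<gamma>1} \<in> edges T" and e13: "{\<gamma>1, \<gamma>3} \<in> edges T"
    using te(1) unfolding t1 by (simp_all add: insert_commute)
  have ti: "\<tau>1 \<in> int_edges T" "\<tau>2 \<in> int_edges T" "\<tau>3 \<in> int_edges T"
    using edge_at_int_vert[OF te(1) _ interior(1)] edge_at_int_vert[OF te(2) _ interior(1)]
      edge_at_int_vert[OF te(3) _ interior(2)] t1 t2 t3 by auto
  have r0: "r \<ge> 0"
  proof -
    have "rr \<tau>1 \<noteq> -1" using no_minus_one ti(1) t1 by auto
    then show ?thesis using r_on_edges(1) r_ge by simp
  qed
  have rv: "rr \<tau> = r" if "\<tau> \<in> int_edges T" "\<gamma> \<in> \<tau>" "\<gamma> \<in> {\<gamma>1, \<gamma>2, \<gamma>3}" for \<tau> \<gamma>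
    using rr_vals no_minus_one that by blast
  have rv1: "\<And>\<tau>. \<tau> \<in> int_edges T \<Longrightarrow> \<gamma>1 \<in> \<tau> \<Longrightarrow> rr \<tau> = r" using rv by simp
  have rv2: "\<And>\<tau>. \<tau> \<in> int_edges T \<Longrightarrow> \<gamma>2 \<in> \<tau> \<Longrightarrow> rr \<tau> = r" using rv by simp
  have rv3: "\<And>\<tau>. \<tau> \<in> int_edges T \<Longrightarrow> \<gamma>3 \<in> \<tau> \<Longrightarrow> rr \<tau> = r" using rv by simp
  have D2: "det2 (\<gamma>3 - \<gamma>2) (\<gamma>1 - \<gamma>2) \<noteq> 0" using D det2_cyc(1)[of \<gamma>3 \<gamma>2 \<gamma>1] by simp
  have D3: "det2 (\<gamma>1 - \<gamma>3) (\<gamma>2 - \<gamma>3) \<noteq> 0" using D det2_cyc(2)[of \<gamma>1 \<gamma>3 \<gamma>2] by simp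
  have n1: "nslopes T \<gamma>1 \<ge> 2" by (rule nslopes_ge2[OF tri D e12 e13])
  have n2: "nslopes T \<gamma>2 \<ge> 2" by (rule nslopes_ge2[OF tri D2 e23 e21])
  have n3: "nslopes T \<gamma>3 \<ge> 2" by (rule nslopes_ge2[OF tri D3 e31 e32])
  have Xnn: "0 \<le> r + \<lceil>real_of_int (r + 1) / real_of_int (min (r + 2) (int n) - 1)\<rceil>" if "n \<ge> 2" for n :: nat
  proof -
    have "min (r + 2) (int n) - 1 > 0" using that r0 by simp
    then have "real_of_int (r + 1) / real_of_int (min (r + 2) (int n) - 1) > 0" using r0 by simp
    then have "\<lceil>real_of_int (r + 1) / real_of_int (min (r + 2) (int n) - 1)\<rceil> > 0" by simp
    then show ?thesis using r0 by simp
  qed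
  have O1: "int (Omg T r \<gamma>1) = r + \<lceil>real_of_int (r + 1) / real_of_int (min (r + 2) (int (nslopes T \<gamma>1)) - 1)\<rceil>"
    unfolding Omg_def using Xnn[OF n1] by simp
  have O2: "int (Omg T r \<gamma>2) = r + \<lceil>real_of_int (r + 1) / real_of_int (min (r + 2) (int (nslopes T \<gamma>2)) - 1)\<rceil>"
    unfolding Omg_def using Xnn[OF n2] by simp
  have O3: "int (Omg T r \<gamma>3) = r + \<lceil>real_of_int (r + 1) / real_of_int (min (r + 2) (int (nslopes T \<gamma>3)) - 1)\<rceil>"
    unfolding Omg_def using Xnn[OF n3] by simp
  have "real m > real_of_int (int (Omg T r \<gamma>1) + int (Omg T r \<gamma>2) + int (Omg T r \<gamma>3) - 3) / 2"
    using bound unfolding O1 O2 O3 .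
  then have "real_of_int (int (Omg T r \<gamma>1) + int (Omg T r \<gamma>2) + int (Omg T r \<gamma>3) - 3) < real_of_int (2 * int m)"
    by simp
  then have "int (Omg T r \<gamma>1) + int (Omg T r \<gamma>2) + int (Omg T r \<gamma>3) - 3 < 2 * int m"
    by (simp only: of_int_less_iff)
  then have bnd: "Omg T r \<gamma>1 + Omg T r \<gamma>2 + Omg T r \<gamma>3 < 2 * m + 3" by linarith
  have dec: "\<exists>j1 j2 j3. j1 \<in> J_vert T m rr \<gamma>1 \<and> j2 \<in> J_vert T m rr \<gamma>2 \<and> j3 \<in> J_vert T m rr \<gamma>3 \<and>
           (\<forall>z. p z = j1 z + j2 z + j3 z)" if "p \<in> Pm m" for p
    by (rule decomposition[OF tri D e12 e21 e23 e32 e31 e13 interior]) (use rv1 rv2 rv3 r0 bnd that in auto)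
  define s where "s = (\<lambda>\<tau>. if \<tau> \<in> {\<tau>1, \<tau>2, \<tau>3} then -1 else rr \<tau>)"
  have Js_Pm: "J_edge m s \<tau> = Pm m" if "\<tau> \<in> {\<tau>1, \<tau>2, \<tau>3}" for \<tau>
    by (rule J_edge_minus1) (use that in \<open>simp add: s_def\<close>)
  have Js_eq: "J_edge m s \<tau> = J_edge m rr \<tau>" if "\<tau> \<notin> {\<tau>1, \<tau>2, \<tau>3}" for \<tau>
    by (rule J_edge_cong) (use that in \<open>simp add: s_def\<close>)
  have Jv_sub: "J_vert T m rr \<gamma> \<subseteq> J_vert T m s \<gamma>" for \<gamma>
  proof (rule J_vert_mono)
    fix \<tau> show "J_edge m rr \<tau> \<subseteq> J_edge m s \<tau>"
      by (cases "\<tau> \<in> {\<tau>1, \<tau>2, \<tau>3}") (simp_all add: Js_Pm J_edge_sub Js_eq)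
  qed
  have Jv_eq: "J_vert T m s \<gamma> = J_vert T m rr \<gamma>" if "\<gamma> \<notin> {\<gamma>1, \<gamma>2, \<gamma>3}" for \<gamma>
  proof (rule J_vert_cong)
    fix \<tau> assume "\<tau> \<in> int_edges T" "\<gamma> \<in> \<tau>"
    then have "\<tau> \<notin> {\<tau>1, \<tau>2, \<tau>3}" using that t1 t2 t3 by auto
    then show "s \<tau> = rr \<tau>" by (simp add: s_def)
  qed
  have H1r: "H1_vanishes T m rr" and H0r: "H0_vanishes T m rr" using acyc unfolding lower_acyclic_def by auto
  have finI: "finite (int_edges T)" by (rule finite_int_edges[OF tri])
  have H0s: "H0_vanishes T m s"
    unfolding H0_vanishes_def
  proof (intro allI impI)
    fix g assume "\<forall>\<gamma>\<in>int_verts T. g \<gamma> \<in> Pm m"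
    then obtain f where "\<forall>\<tau>\<in>int_edges T. f \<tau> \<in> Pm m"
      "\<forall>\<gamma>\<in>int_verts T. (\<lambda>z. bd1 T f \<gamma> z - g \<gamma> z) \<in> J_vert T m rr \<gamma>"
      using H0r unfolding H0_vanishes_def by blast
    then show "\<exists>f. (\<forall>\<tau>\<in>int_edges T. f \<tau> \<in> Pm m) \<and>
          (\<forall>\<gamma>\<in>int_verts T. (\<lambda>z. bd1 T f \<gamma> z - g \<gamma> z) \<in> J_vert T m s \<gamma>)"
      using Jv_sub by blast
  qed
  have H1s: "H1_vanishes T m s"
    unfolding H1_vanishes_def
  proof (intro allI impI, elim conjE)
    fix f assume fP: "\<forall>\<tau>\<in>int_edges T. f \<tau> \<in> Pm m"
      and cyc: "\<forall>\<gamma>\<in>int_verts T. bd1 T f \<gamma> \<in> J_vert T m s \<gamma>"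
    let ?e = "edge_vsign"
    have bdP: "bd1 T f \<gamma> \<in> Pm m" for \<gamma>
      unfolding bd1_def by (rule Pm_sum[OF finI]) (use fP in \<open>auto intro: Pm_scale\<close>)
    obtain j11 j12 j13 where j1: "j11 \<in> J_vert T m rr \<gamma>1" "j12 \<in> J_vert T m rr \<gamma>2" "j13 \<in> J_vert T m rr \<gamma>3"
      "\<forall>z. bd1 T f \<gamma>1 z = j11 z + j12 z + j13 z" using dec[OF bdP] by blast
    obtain j21 j22 j23 where j2: "j21 \<in> J_vert T m rr \<gamma>1" "j22 \<in> J_vert T m rr \<gamma>2" "j23 \<in> J_vert T m rr \<gamma>3"
      "\<forall>z. bd1 T f \<gamma>2 z = j21 z + j22 z + j23 z" using dec[OF bdP] by blast
    obtain j31 j32 j33 where j3: "j31 \<in> J_vert T m rr \<gamma>1" "j32 \<in> J_vert T m rr \<gamma>2" "j33 \<in> J_vert T m rr \<gamma>3"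
      "\<forall>z. bd1 T f \<gamma>3 z = j31 z + j32 z + j33 z" using dec[OF bdP] by blast
    define c1 where "c1 = (\<lambda>z. - (?e \<tau>1 \<gamma>3 * j31 z + ?e \<tau>1 \<gamma>1 * j13 z))"
    define c2 where "c2 = (\<lambda>z. - (?e \<tau>2 \<gamma>1 * j12 z + ?e \<tau>2 \<gamma>2 * j21 z))"
    define c3 where "c3 = (\<lambda>z. - (?e \<tau>3 \<gamma>2 * j23 z + ?e \<tau>3 \<gamma>3 * j32 z))"
    define corr where "corr = (\<lambda>\<tau> z. if \<tau> = \<tau>1 then c1 z else if \<tau> = \<tau>2 then c2 z else if \<tau> = \<tau>3 then c3 z else 0)"
    define f' where "f' = (\<lambda>\<tau> z. f \<tau> z + corr \<tau> z)"
    note JP = J_vert_sub[OF tri]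
    have jP: "j11 \<in> Pm m" "j12 \<in> Pm m" "j13 \<in> Pm m" "j21 \<in> Pm m" "j22 \<in> Pm m" "j23 \<in> Pm m"
      "j31 \<in> Pm m" "j32 \<in> Pm m" "j33 \<in> Pm m" using j1 j2 j3 JP by blast+
    have cP: "c1 \<in> Pm m" "c2 \<in> Pm m" "c3 \<in> Pm m" unfolding c1_def c2_def c3_def
      by (intro Pm_neg Pm_add Pm_scale jP)+
    have corrP: "corr \<tau> \<in> Pm m" for \<tau> unfolding corr_def using cP Pm_zero[of m]
      by (cases "\<tau> = \<tau>1"; cases "\<tau> = \<tau>2"; cases "\<tau> = \<tau>3") simp_all
    have f'P: "\<forall>\<tau>\<in>int_edges T. f' \<tau> \<in> Pm m" unfolding f'_def using fP corrP by (auto intro: Pm_add)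
    have tne: "\<tau>1 \<noteq> \<tau>2" "\<tau>2 \<noteq> \<tau>3" "\<tau>1 \<noteq> \<tau>3" using edges_of_face by auto
    have bdf': "bd1 T f' \<gamma> z = bd1 T f \<gamma> z + ?e \<tau>1 \<gamma> * c1 z + ?e \<tau>2 \<gamma> * c2 z + ?e \<tau>3 \<gamma> * c3 z" for \<gamma> z
    proof -
      have "bd1 T f' \<gamma> z = bd1 T f \<gamma> z + (\<Sum>\<tau>\<in>int_edges T. ?e \<tau> \<gamma> * corr \<tau> z)"
        unfolding bd1_def f'_def by (simp add: distrib_left sum.distrib)
      also have "(\<Sum>\<tau>\<in>int_edges T. ?e \<tau> \<gamma> * corr \<tau> z) = (\<Sum>\<tau>\<in>{\<tau>1, \<tau>2, \<tau>3}. ?e \<tau> \<gamma> * corr \<tau> z)"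
        by (rule sum.mono_neutral_right[OF finI]) (use ti in \<open>auto simp: corr_def\<close>)
      also have "\<dots> = ?e \<tau>1 \<gamma> * c1 z + ?e \<tau>2 \<gamma> * c2 z + ?e \<tau>3 \<gamma> * c3 z"
        using tne by (simp add: corr_def)
      finally show ?thesis by simp
    qed
    have sq: "?e \<tau> \<gamma> * ?e \<tau> \<gamma> = 1" if "\<tau> \<in> {\<tau>1, \<tau>2, \<tau>3}" "\<gamma> \<in> \<tau>" for \<tau> \<gamma>
    proof -
      have "card \<tau> = 2" using that(1) edges_of_face(4,5,6) by auto
      then show ?thesis by (rule edge_vsign_in[OF _ that(2)])
    qed
    have z1: "?e \<tau>3 \<gamma>1 = 0" using edge_vsign_out[OF edges_of_face(6)] t3 d12 d13 by auto
    have z2: "?e \<tau>1 \<gamma>2 = 0" using edge_vsign_out[OF edges_of_face(4)] t1 d12 d23 by auto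
    have z3: "?e \<tau>2 \<gamma>3 = 0" using edge_vsign_out[OF edges_of_face(5)] t2 d13 d23 by auto
    have s11: "?e \<tau>1 \<gamma>1 * ?e \<tau>1 \<gamma>1 = 1" using sq t1 by simp
    have s13: "?e \<tau>1 \<gamma>3 * ?e \<tau>1 \<gamma>3 = 1" using sq t1 by simp
    have s21: "?e \<tau>2 \<gamma>1 * ?e \<tau>2 \<gamma>1 = 1" using sq t2 by simp
    have s22: "?e \<tau>2 \<gamma>2 * ?e \<tau>2 \<gamma>2 = 1" using sq t2 by simp
    have s32: "?e \<tau>3 \<gamma>2 * ?e \<tau>3 \<gamma>2 = 1" using sq t3 by simp
    have s33: "?e \<tau>3 \<gamma>3 * ?e \<tau>3 \<gamma>3 = 1" using sq t3 by simp
    have C: "closedW (J_vert T m rr \<gamma>)" for \<gamma> by (rule J_vert_closed[OF tri])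
    have comb: "(\<lambda>z. p z + a * q z + b * w z) \<in> J_vert T m rr \<gamma>"
      if "p \<in> J_vert T m rr \<gamma>" "q \<in> J_vert T m rr \<gamma>" "w \<in> J_vert T m rr \<gamma>" for p q w a b \<gamma>
      using C[of \<gamma>] that unfolding closedW_def by simp
    have cyc': "\<forall>\<gamma>\<in>int_verts T. bd1 T f' \<gamma> \<in> J_vert T m rr \<gamma>"
    proof
      fix \<gamma> assume gi: "\<gamma> \<in> int_verts T"
      consider "\<gamma> = \<gamma>1" | "\<gamma> = \<gamma>2" | "\<gamma> = \<gamma>3" | "\<gamma> \<notin> {\<gamma>1, \<gamma>2, \<gamma>3}" by blast
      then show "bd1 T f' \<gamma> \<in> J_vert T m rr \<gamma>"
      proof cases
        case 1
        have "(\<lambda>z. j11 z + (- (?e \<tau>1 \<gamma>1 * ?e \<tau>1 \<gamma>3)) * j31 z + (- (?e \<tau>2 \<gamma>1 * ?e \<tau>2 \<gamma>2)) * j21 z) \<in> J_vert T m rr \<gamma>1"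
          by (rule comb) (use j1 j2 j3 in auto)
        then show ?thesis unfolding 1
        proof (rule closedW_ext)
          fix z show "bd1 T f' \<gamma>1 z = j11 z + (- (?e \<tau>1 \<gamma>1 * ?e \<tau>1 \<gamma>3)) * j31 z + (- (?e \<tau>2 \<gamma>1 * ?e \<tau>2 \<gamma>2)) * j21 z"
            unfolding bdf' c1_def c2_def c3_def z1 using spec[OF j1(4), of z] s11 s21
            by (simp add: algebra_simps)
        qed
      next
        case 2
        have "(\<lambda>z. j22 z + (- (?e \<tau>2 \<gamma>2 * ?e \<tau>2 \<gamma>1)) * j12 z + (- (?e \<tau>3 \<gamma>2 * ?e \<tau>3 \<gamma>3)) * j32 z) \<in> J_vert T m rr \<gamma>2"
          by (rule comb) (use j1 j2 j3 in auto)
        then show ?thesis unfolding 2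
        proof (rule closedW_ext)
          fix z show "bd1 T f' \<gamma>2 z = j22 z + (- (?e \<tau>2 \<gamma>2 * ?e \<tau>2 \<gamma>1)) * j12 z + (- (?e \<tau>3 \<gamma>2 * ?e \<tau>3 \<gamma>3)) * j32 z"
            unfolding bdf' c1_def c2_def c3_def z2 using spec[OF j2(4), of z] s22 s32
            by (simp add: algebra_simps)
        qed
      next
        case 3
        have "(\<lambda>z. j33 z + (- (?e \<tau>3 \<gamma>3 * ?e \<tau>3 \<gamma>2)) * j23 z + (- (?e \<tau>1 \<gamma>3 * ?e \<tau>1 \<gamma>1)) * j13 z) \<in> J_vert T m rr \<gamma>3"
          by (rule comb) (use j1 j2 j3 in auto)
        then show ?thesis unfolding 3
        proof (rule closedW_ext)
          fix z show "bd1 T f' \<gamma>3 z = j33 z + (- (?e \<tau>3 \<gamma>3 * ?e \<tau>3 \<gamma>2)) * j23 z + (- (?e \<tau>1 \<gamma>3 * ?e \<tau>1 \<gamma>1)) * j13 z"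
            unfolding bdf' c1_def c2_def c3_def z3 using spec[OF j3(4), of z] s33 s13
            by (simp add: algebra_simps)
        qed
      next
        case 4
        have "?e \<tau>1 \<gamma> = 0" "?e \<tau>2 \<gamma> = 0" "?e \<tau>3 \<gamma> = 0"
          using edge_vsign_out edges_of_face(4,5,6) 4 t1 t2 t3 by auto
        then have "bd1 T f' \<gamma> z = bd1 T f \<gamma> z" for z using bdf'[of \<gamma> z] by simp
        then have "bd1 T f' \<gamma> = bd1 T f \<gamma>" by (rule ext)
        moreover have "bd1 T f \<gamma> \<in> J_vert T m s \<gamma>" using cyc gi by blast
        ultimately show ?thesis using Jv_eq[OF 4] by simp
      qed
    qed
    obtain h where h: "\<forall>\<sigma>\<in>T. h \<sigma> \<in> Pm m" "\<forall>\<tau>\<in>int_edges T. (\<lambda>z. f' \<tau> z - bd2 T h \<tau> z) \<in> J_edge m rr \<tau>"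
      using H1r f'P cyc' unfolding H1_vanishes_def by blast
    have bd2P: "bd2 T h \<tau> \<in> Pm m" for \<tau>
      unfolding bd2_def by (rule Pm_sum[OF finT]) (use h(1) in \<open>auto intro: Pm_scale\<close>)
    show "\<exists>h. (\<forall>\<sigma>\<in>T. h \<sigma> \<in> Pm m) \<and> (\<forall>\<tau>\<in>int_edges T. (\<lambda>z. f \<tau> z - bd2 T h \<tau> z) \<in> J_edge m s \<tau>)"
    proof (intro exI[of _ h] conjI ballI)
      show "\<And>\<sigma>. \<sigma> \<in> T \<Longrightarrow> h \<sigma> \<in> Pm m" using h(1) by blast
      fix \<tau> assume tI: "\<tau> \<in> int_edges T"
      show "(\<lambda>z. f \<tau> z - bd2 T h \<tau> z) \<in> J_edge m s \<tau>"
      proof (cases "\<tau> \<in> {\<tau>1, \<tau>2, \<tau>3}")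
        case True
        then show ?thesis unfolding Js_Pm[OF True] using fP tI bd2P by (auto intro: Pm_diff)
      next
        case False
        have "f' \<tau> = f \<tau>" unfolding f'_def corr_def using False by auto
        then show ?thesis unfolding Js_eq[OF False] using h(2) tI by auto
      qed
    qed
  qed
  show ?thesis unfolding lower_acyclic_def s_def[symmetric] using H0s H1s by simp
qed

end
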